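(* Let $(E,(\cdot,\cdot),\mathcal H)$ be an extended affine Lie algebra with root system $R$. Let $R'$ be a finite closed subsystem of $R$ and $\mathcal H'\subseteq\mathcal H$ a cover for $R'$. Then the Lie cover $E_{R',\mathcal H'}$ is a finite-dimensional reductive Lie algebra. In particular, with $\mathcal H_{R'}:=\sum_{\alpha\in R'}\mathbb Ct_\alpha$, the Lie cover $E_{R',\mathcal H_{R'}}$ is a finite-dimensional simple Lie algebra with root system $R'$.
   Context: All Lie algebras are over $\mathbb C$. An extended affine Lie algebra (EALA) is a triple $(E,(\cdot,\cdot),\mathcal H)$ where $E$ is a Lie algebra, $\mathcal H$ a subalgebra and $(\cdot,\cdot)$ a bilinear form on $E$ such that: (EA1) symmetric, non-degenerate, invariant form; (EA2) $\mathcal H$ finite-dimensional, $E=\bigoplus_{\alpha\in\mathcal H^*}E_\alpha$, $E_\alpha=\{x:[h,x]=\alpha(h)x\ \forall h\in\mathcal H\}$, $E_0=\mathcal H$; root system $R=\{\alpha:E_\alpha\neq0\}$; $t_\alpha\in\mathcal H$ given by $\alpha(h)=(h,t_\alpha)$, $(\alpha,\beta):=(t_\alpha,t_\beta)$, $R^\times=\{\alpha\in R:(\alpha,\alpha)\ne0\}$, $R^0=R\setminus R^\times$; (EA3) $\mathrm{ad}\,x$ locally nilpotent for $x\in E_\alpha$, $\alpha\in R^\times$; (EA4) $R$ discrete; (EA5) $R^\times$ connected (not a union of two nonempty mutually orthogonal subsets) and every isotropic root non-isolated. Root systems are assumed reduced. An extended affine root system (EARS) is a triple $(R,(\cdot,\cdot),\mathcal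 V)$, $\mathcal V$ finite-dimensional real, form symmetric positive semidefinite, $R\subseteq\mathcal V$ with: $0\in R$; $R=-R$; $R$ spans $\mathcal V$; $\alpha\in R^\times\Rightarrow2\alpha\notin R$; $R$ discrete; root string property (for $\alpha\in R^\times,\beta\in R$ there are integers $d,u\ge0$ with $(\beta+\mathbb Z\alpha)\cap R=\{\beta-d\alpha,\dots,\beta+u\alpha\}$, $2(\beta,\alpha)/(\alpha,\alpha)=d-u$); isotropic roots non-isolated; $R^\times$ connected. A subsystem of $R$ is $R'\subseteq R$ with $(R',(\cdot,\cdot)|,\mathrm{span}_{\mathbb R}R')$ an EARS; closed means $(R'+R')\cap R\subseteq R'$. A cover of a closed subsystem $R'$ is a subspace $\mathcal H'\subseteq\mathcal H$ with $t_\alpha\in\mathcal H'$ for all $\alpha\in R'^\times$ and the form non-degenerate on $\mathcal H'$; the Lie cover is $E_{R',\mathcal H'}=\mathcal H'\oplus\sum_{\alpha\in R'\setminus\{0\}}E_\alpha$ with the bracket of $E$. *)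

theory Defs
  imports "HOL-Analysis.Analysis"
begin

text \<open>A complex vector space is modelled as a type 'a of class ab_group_add together
with a scalar multiplication smul :: complex => 'a => 'a satisfying the vector_space
axioms.  The Lie algebra E is the whole type 'a, with bracket br.
Linear functionals on H (elements of H-star) are functions 'a => complex that are
linear on H and are normalised to vanish outside H (so that H-star is identified
with a set of functions faithfully).\<close>

definition lie_algebra :: "(complex \<Rightarrow> 'a::ab_group_add \<Rightarrow> 'a) \<Rightarrow> ('a \<Rightarrow> 'a \<Rightarrow> 'a) \<Rightarrow> bool" where
  "lie_algebra smul br \<longleftrightarrow>
     vector_space smul \<and>
     (\<forall>a b x y z. br (smul a x + smul b y) z = smul a (br x z) + smul b (br y z)) \<and>
     (\<forall>x. br x x = 0) \<and>
     (\<forall>x y z. br x (br y z) + br y (br z x) + br z (br x y) = 0)"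

definition lie_subalgebra :: "(complex \<Rightarrow> 'a::ab_group_add \<Rightarrow> 'a) \<Rightarrow> ('a \<Rightarrow> 'a \<Rightarrow> 'a) \<Rightarrow> 'a set \<Rightarrow> bool" where
  "lie_subalgebra smul br L \<longleftrightarrow> module.subspace smul L \<and> (\<forall>x\<in>L. \<forall>y\<in>L. br x y \<in> L)"

definition lie_ideal :: "(complex \<Rightarrow> 'a::ab_group_add \<Rightarrow> 'a) \<Rightarrow> ('a \<Rightarrow> 'a \<Rightarrow> 'a) \<Rightarrow> 'a set \<Rightarrow> 'a set \<Rightarrow> bool" where
  "lie_ideal smul br L I \<longleftrightarrow> module.subspace smul I \<and> I \<subseteq> L \<and> (\<forall>x\<in>L. \<forall>y\<in>I. br x y \<in> I)"

definition fin_dim :: "(complex \<Rightarrow> 'a::ab_group_add \<Rightarrow> 'a) \<Rightarrow> 'a set \<Rightarrow> bool" where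
  "fin_dim smul S \<longleftrightarrow> (\<exists>F. finite F \<and> S \<subseteq> module.span smul F)"

text \<open>Reductive (Bourbaki): the adjoint representation is completely reducible, i.e.
every ideal has a complementary ideal.\<close>
definition reductive_lie :: "(complex \<Rightarrow> 'a::ab_group_add \<Rightarrow> 'a) \<Rightarrow> ('a \<Rightarrow> 'a \<Rightarrow> 'a) \<Rightarrow> 'a set \<Rightarrow> bool" where
  "reductive_lie smul br L \<longleftrightarrow> lie_subalgebra smul br L \<and>
     (\<forall>I. lie_ideal smul br L I \<longrightarrow>
        (\<exists>J. lie_ideal smul br L J \<and> I \<inter> J = {0} \<and> L = {x + y |x y. x \<in> I \<and> y \<in> J}))"

definition simple_lie :: "(complex \<Rightarrow> 'a::ab_group_add \<Rightarrow> 'a) \<Rightarrow> ('a \<Rightarrow> 'a \<Rightarrow> 'a) \<Rightarrow> 'a set \<Rightarrow> bool" where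
  "simple_lie smul br L \<longleftrightarrow> lie_subalgebra smul br L \<and>
     (\<exists>x\<in>L. \<exists>y\<in>L. br x y \<noteq> 0) \<and>
     (\<forall>I. lie_ideal smul br L I \<longrightarrow> I = {0} \<or> I = L)"

definition lin_functional :: "(complex \<Rightarrow> 'a::ab_group_add \<Rightarrow> 'a) \<Rightarrow> 'a set \<Rightarrow> ('a \<Rightarrow> complex) \<Rightarrow> bool" where
  "lin_functional smul H \<alpha> \<longleftrightarrow>
     (\<forall>x\<in>H. \<forall>y\<in>H. \<forall>a b. \<alpha> (smul a x + smul b y) = a * \<alpha> x + b * \<alpha> y) \<and>
     (\<forall>x. x \<notin> H \<longrightarrow> \<alpha> x = 0)"

definition root_space :: "(complex \<Rightarrow> 'a::ab_group_add \<Rightarrow> 'a) \<Rightarrow> ('a \<Rightarrow> 'a \<Rightarrow> 'a) \<Rightarrow> 'a set \<Rightarrow> ('a \<Rightarrow> complex) \<Rightarrow> 'a set" where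
  "root_space smul br H \<alpha> = {x. \<forall>h\<in>H. br h x = smul (\<alpha> h) x}"

text \<open>Roots of (L, H): functionals on H whose weight space inside L is nonzero
(0 included, as in the paper's convention).\<close>
definition roots_in :: "(complex \<Rightarrow> 'a::ab_group_add \<Rightarrow> 'a) \<Rightarrow> ('a \<Rightarrow> 'a \<Rightarrow> 'a) \<Rightarrow> 'a set \<Rightarrow> 'a set \<Rightarrow> ('a \<Rightarrow> complex) set" where
  "roots_in smul br L H = {\<alpha>. lin_functional smul H \<alpha> \<and> root_space smul br H \<alpha> \<inter> L \<noteq> {0}}"

abbreviation roots :: "(complex \<Rightarrow> 'a::ab_group_add \<Rightarrow> 'a) \<Rightarrow> ('a \<Rightarrow> 'a \<Rightarrow> 'a) \<Rightarrow> 'a set \<Rightarrow> ('a \<Rightarrow> complex) set" where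
  "roots smul br H \<equiv> roots_in smul br UNIV H"

definition tvec :: "('a \<Rightarrow> 'a \<Rightarrow> complex) \<Rightarrow> 'a set \<Rightarrow> ('a \<Rightarrow> complex) \<Rightarrow> 'a" where
  "tvec B H \<alpha> = (THE t. t \<in> H \<and> (\<forall>h\<in>H. \<alpha> h = B h t))"

definition rform :: "('a \<Rightarrow> 'a \<Rightarrow> complex) \<Rightarrow> 'a set \<Rightarrow> ('a \<Rightarrow> complex) \<Rightarrow> ('a \<Rightarrow> complex) \<Rightarrow> complex" where
  "rform B H \<alpha> \<beta> = B (tvec B H \<alpha>) (tvec B H \<beta>)"

definition aniso :: "('a \<Rightarrow> 'a \<Rightarrow> complex) \<Rightarrow> 'a set \<Rightarrow> ('a \<Rightarrow> complex) set \<Rightarrow> ('a \<Rightarrow> complex) set" where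
  "aniso B H S = {\<alpha> \<in> S. rform B H \<alpha> \<alpha> \<noteq> 0}"

text \<open>Discreteness of a set of linear functionals on the finite-dimensional space H
(w.r.t. the standard topology of H-star, measured by evaluation on a finite spanning set).\<close>
definition discrete_fun :: "(complex \<Rightarrow> 'a::ab_group_add \<Rightarrow> 'a) \<Rightarrow> 'a set \<Rightarrow> ('a \<Rightarrow> complex) set \<Rightarrow> bool" where
  "discrete_fun smul H S \<longleftrightarrow> (\<exists>F. finite F \<and> F \<subseteq> H \<and> H \<subseteq> module.span smul F \<and>
     (\<forall>\<alpha>\<in>S. \<exists>e>0. \<forall>\<beta>\<in>S. \<beta> \<noteq> \<alpha> \<longrightarrow> (\<exists>h\<in>F. cmod (\<beta> h - \<alpha> h) \<ge> e)))"

definition connected_roots :: "('a \<Rightarrow> 'a \<Rightarrow> complex) \<Rightarrow> 'a set \<Rightarrow> ('a \<Rightarrow> complex) set \<Rightarrow> bool" where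
  "connected_roots B H S \<longleftrightarrow> \<not> (\<exists>A1 A2. A1 \<noteq> {} \<and> A2 \<noteq> {} \<and> A1 \<union> A2 = aniso B H S \<and>
      (\<forall>a\<in>A1. \<forall>b\<in>A2. rform B H a b = 0))"

text \<open>Isotropic roots are non-isolated: R0 is contained in Rx - Rx.\<close>
definition nonisolated :: "('a \<Rightarrow> 'a \<Rightarrow> complex) \<Rightarrow> 'a set \<Rightarrow> ('a \<Rightarrow> complex) set \<Rightarrow> bool" where
  "nonisolated B H S \<longleftrightarrow> (\<forall>\<delta>\<in>S - aniso B H S. \<exists>\<alpha>\<in>aniso B H S.
      (\<lambda>h. \<alpha> h + \<delta> h) \<in> aniso B H S)"

definition reduced_roots :: "('a \<Rightarrow> 'a \<Rightarrow> complex) \<Rightarrow> 'a set \<Rightarrow> ('a \<Rightarrow> complex) set \<Rightarrow> bool" where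
  "reduced_roots B H S \<longleftrightarrow> (\<forall>\<alpha>\<in>aniso B H S. (\<lambda>h. 2 * \<alpha> h) \<notin> S)"

definition eala :: "(complex \<Rightarrow> 'a::ab_group_add \<Rightarrow> 'a) \<Rightarrow> ('a \<Rightarrow> 'a \<Rightarrow> 'a) \<Rightarrow> ('a \<Rightarrow> 'a \<Rightarrow> complex) \<Rightarrow> 'a set \<Rightarrow> bool" where
  "eala smul br B H \<longleftrightarrow>
     lie_algebra smul br \<and>
     \<comment> \<open>EA1\<close>
     (\<forall>a b x y z. B (smul a x + smul b y) z = a * B x z + b * B y z) \<and>
     (\<forall>x y. B x y = B y x) \<and>
     (\<forall>x. (\<forall>y. B x y = 0) \<longrightarrow> x = 0) \<and>
     (\<forall>x y z. B (br x y) z = B x (br y z)) \<and>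
     \<comment> \<open>EA2\<close>
     lie_subalgebra smul br H \<and> fin_dim smul H \<and>
     (\<forall>x. \<exists>F c. finite F \<and> (\<forall>\<alpha>\<in>F. lin_functional smul H \<alpha> \<and> c \<alpha> \<in> root_space smul br H \<alpha>)
              \<and> x = sum c F) \<and>
     (\<forall>F c. finite F \<and> (\<forall>\<alpha>\<in>F. lin_functional smul H \<alpha> \<and> c \<alpha> \<in> root_space smul br H \<alpha>)
              \<and> sum c F = 0 \<longrightarrow> (\<forall>\<alpha>\<in>F. c \<alpha> = 0)) \<and>
     root_space smul br H (\<lambda>_. 0) = H \<and>
     \<comment> \<open>EA3\<close>
     (\<forall>\<alpha>\<in>aniso B H (roots smul br H). \<forall>x\<in>root_space smul br H \<alpha>. \<forall>y. \<exists>n. (br x ^^ n) y = 0) \<and>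
     \<comment> \<open>EA4\<close>
     discrete_fun smul H (roots smul br H) \<and>
     \<comment> \<open>EA5\<close>
     connected_roots B H (roots smul br H) \<and> nonisolated B H (roots smul br H) \<and>
     \<comment> \<open>reducedness\<close>
     reduced_roots B H (roots smul br H)"

definition rspan :: "('a \<Rightarrow> complex) set \<Rightarrow> ('a \<Rightarrow> complex) set" where
  "rspan S = {f. \<exists>F c. finite F \<and> F \<subseteq> S \<and> f = (\<lambda>h. \<Sum>\<alpha>\<in>F. complex_of_real (c \<alpha>) * \<alpha> h)}"

definition ears :: "(complex \<Rightarrow> 'a::ab_group_add \<Rightarrow> 'a) \<Rightarrow> ('a \<Rightarrow> 'a \<Rightarrow> complex) \<Rightarrow> 'a set \<Rightarrow> ('a \<Rightarrow> complex) set \<Rightarrow> bool" where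
  "ears smul B H S \<longleftrightarrow>
     (\<forall>v\<in>rspan S. \<forall>w\<in>rspan S. Im (rform B H v w) = 0) \<and>
     (\<forall>v\<in>rspan S. Re (rform B H v v) \<ge> 0) \<and>
     (\<lambda>_. 0) \<in> S \<and>
     (\<forall>\<alpha>\<in>S. (\<lambda>h. - \<alpha> h) \<in> S) \<and>
     reduced_roots B H S \<and>
     discrete_fun smul H S \<and>
     (\<forall>\<alpha>\<in>aniso B H S. \<forall>\<beta>\<in>S. \<exists>d u :: nat.
        {k :: int. (\<lambda>h. \<beta> h + of_int k * \<alpha> h) \<in> S} = {- int d .. int u} \<and>
        2 * rform B H \<beta> \<alpha> / rform B H \<alpha> \<alpha> = of_int (int d - int u)) \<and>
     nonisolated B H S \<and>
     connected_roots B H S"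

definition subsystem :: "(complex \<Rightarrow> 'a::ab_group_add \<Rightarrow> 'a) \<Rightarrow> ('a \<Rightarrow> 'a \<Rightarrow> complex) \<Rightarrow> 'a set \<Rightarrow> ('a \<Rightarrow> complex) set \<Rightarrow> ('a \<Rightarrow> complex) set \<Rightarrow> bool" where
  "subsystem smul B H R S \<longleftrightarrow> S \<subseteq> R \<and> ears smul B H S"

definition closed_sub :: "('a \<Rightarrow> complex) set \<Rightarrow> ('a \<Rightarrow> complex) set \<Rightarrow> bool" where
  "closed_sub R S \<longleftrightarrow> (\<forall>\<alpha>\<in>S. \<forall>\<beta>\<in>S. (\<lambda>h. \<alpha> h + \<beta> h) \<in> R \<longrightarrow> (\<lambda>h. \<alpha> h + \<beta> h) \<in> S)"

definition is_cover :: "(complex \<Rightarrow> 'a::ab_group_add \<Rightarrow> 'a) \<Rightarrow> ('a \<Rightarrow> 'a \<Rightarrow> complex) \<Rightarrow> 'a set \<Rightarrow> ('a \<Rightarrow> complex) set \<Rightarrow> 'a set \<Rightarrow> bool" where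
  "is_cover smul B H S H' \<longleftrightarrow> module.subspace smul H' \<and> H' \<subseteq> H \<and>
     (\<forall>\<alpha>\<in>aniso B H S. tvec B H \<alpha> \<in> H') \<and>
     (\<forall>x\<in>H'. (\<forall>y\<in>H'. B x y = 0) \<longrightarrow> x = 0)"

definition lie_cover :: "(complex \<Rightarrow> 'a::ab_group_add \<Rightarrow> 'a) \<Rightarrow> ('a \<Rightarrow> 'a \<Rightarrow> 'a) \<Rightarrow> 'a set \<Rightarrow> ('a \<Rightarrow> complex) set \<Rightarrow> 'a set \<Rightarrow> 'a set" where
  "lie_cover smul br H S H' = module.span smul (H' \<union> (\<Union>\<alpha>\<in>S - {\<lambda>_. 0}. root_space smul br H \<alpha>))"

definition hsub :: "(complex \<Rightarrow> 'a::ab_group_add \<Rightarrow> 'a) \<Rightarrow> ('a \<Rightarrow> 'a \<Rightarrow> complex) \<Rightarrow> 'a set \<Rightarrow> ('a \<Rightarrow> complex) set \<Rightarrow> 'a set" where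
  "hsub smul B H S = module.span smul (tvec B H ` S)"

definition restrict_fun :: "('a \<Rightarrow> complex) \<Rightarrow> 'a set \<Rightarrow> ('a \<Rightarrow> complex)" where
  "restrict_fun \<alpha> K = (\<lambda>h. if h \<in> K then \<alpha> h else 0)"

end

theory Submission
  imports Defs
begin


locale EA =
  fixes smul :: "complex \<Rightarrow> 'a::ab_group_add \<Rightarrow> 'a"
    and br :: "'a \<Rightarrow> 'a \<Rightarrow> 'a"
    and B :: "'a \<Rightarrow> 'a \<Rightarrow> complex"
    and H :: "'a set"
  assumes eala: "eala smul br B H"
begin

lemma lie: "lie_algebra smul br" using eala[unfolded eala_def, THEN conjunct1] by blast

lemma vs: "vector_space smul" using lie unfolding lie_algebra_def by blast

sublocale V: vector_space smul by (rule vs)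

lemma br_lin: "br (smul a x + smul b y) z = smul a (br x z) + smul b (br y z)"
  using lie unfolding lie_algebra_def by blast
lemma br_xx[simp]: "br x x = 0"
  using lie unfolding lie_algebra_def by blast
lemma jacobi: "br x (br y z) + br y (br z x) + br z (br x y) = 0"
  using lie unfolding lie_algebra_def by blast

lemma B_lin: "B (smul a x + smul b y) z = a * B x z + b * B y z"
  using eala[unfolded eala_def, THEN conjunct2, THEN conjunct1] by blast
lemma B_sym: "B x y = B y x"
  using eala[unfolded eala_def, THEN conjunct2, THEN conjunct2, THEN conjunct1] by blast
lemma B_nd: "(\<And>y. B x y = 0) \<Longrightarrow> x = 0"
  using eala[unfolded eala_def, THEN conjunct2, THEN conjunct2, THEN conjunct2, THEN conjunct1] by blast
lemma B_inv: "B (br x y) z = B x (br y z)"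
  using eala[unfolded eala_def, THEN conjunct2, THEN conjunct2, THEN conjunct2, THEN conjunct2, THEN conjunct1] by blast
lemma H_sub: "lie_subalgebra smul br H"
  using eala[unfolded eala_def, THEN conjunct2, THEN conjunct2, THEN conjunct2, THEN conjunct2, THEN conjunct2, THEN conjunct1] by blast
lemma H_fin: "fin_dim smul H"
  using eala[unfolded eala_def, THEN conjunct2, THEN conjunct2, THEN conjunct2, THEN conjunct2, THEN conjunct2, THEN conjunct2, THEN conjunct1] by blast
lemma decomp: "\<exists>F c. finite F \<and> (\<forall>\<alpha>\<in>F. lin_functional smul H \<alpha> \<and> c \<alpha> \<in> root_space smul br H \<alpha>) \<and> x = sum c F"
  using eala[unfolded eala_def, THEN conjunct2, THEN conjunct2, THEN conjunct2, THEN conjunct2, THEN conjunct2, THEN conjunct2, THEN conjunct2, THEN conjunct1] by blast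
lemma indep: "finite F \<Longrightarrow> (\<And>\<alpha>. \<alpha>\<in>F \<Longrightarrow> lin_functional smul H \<alpha> \<and> c \<alpha> \<in> root_space smul br H \<alpha>)
   \<Longrightarrow> sum c F = 0 \<Longrightarrow> \<alpha> \<in> F \<Longrightarrow> c \<alpha> = 0"
  using eala[unfolded eala_def, THEN conjunct2, THEN conjunct2, THEN conjunct2, THEN conjunct2, THEN conjunct2, THEN conjunct2, THEN conjunct2, THEN conjunct2, THEN conjunct1] by blast
lemma H0: "root_space smul br H (\<lambda>_. 0) = H"
  using eala[unfolded eala_def, THEN conjunct2, THEN conjunct2, THEN conjunct2, THEN conjunct2, THEN conjunct2, THEN conjunct2, THEN conjunct2, THEN conjunct2, THEN conjunct2, THEN conjunct1] by blast
lemma nilp: "\<alpha>\<in>aniso B H (roots smul br H) \<Longrightarrow> x\<in>root_space smul br H \<alpha> \<Longrightarrow> \<exists>n. (br x ^^ n) y = 0"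
  using eala[unfolded eala_def, THEN conjunct2, THEN conjunct2, THEN conjunct2, THEN conjunct2, THEN conjunct2, THEN conjunct2, THEN conjunct2, THEN conjunct2, THEN conjunct2, THEN conjunct2, THEN conjunct1] by blast

lemma H_subspace: "V.subspace H" using H_sub unfolding lie_subalgebra_def by blast

lemma smul_one[simp]: "smul 1 x = x" by simp

lemma br_add1: "br (x + y) z = br x z + br y z"
  using br_lin[of 1 x 1 y z] by simp
lemma br_0_1[simp]: "br 0 z = 0"
  using br_add1[of 0 0 z] by simp
lemma br_smul1: "br (smul a x) z = smul a (br x z)"
  using br_lin[of a x 0 x z] by simp
lemma br_neg1: "br (- x) z = - br x z"
proof -
  have "br x z + br (- x) z = 0" using br_add1[of x "-x" z] by simp
  then show ?thesis by (metis neg_eq_iff_add_eq_0)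
qed
lemma br_diff1: "br (x - y) z = br x z - br y z"
  using br_add1[of x "-y" z] br_neg1[of y z] by simp

lemma B_add1: "B (x + y) z = B x z + B y z"
  using B_lin[of 1 x 1 y z] by simp
lemma B_0_1[simp]: "B 0 z = 0"
  using B_add1[of 0 0 z] by simp
lemma B_0_2[simp]: "B z 0 = 0"
  using B_sym B_0_1 by metis
lemma B_smul1: "B (smul a x) z = a * B x z"
  using B_lin[of a x 0 x z] by simp
lemma B_neg1: "B (- x) z = - B x z"
proof -
  have "B x z + B (- x) z = 0" using B_add1[of x "-x" z] by simp
  then show ?thesis by (metis neg_eq_iff_add_eq_0)
qed
lemma B_diff1: "B (x - y) z = B x z - B y z"
  using B_add1[of x "-y" z] B_neg1[of y z] by simp
lemma B_add2: "B z (x + y) = B z x + B z y"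
  using B_add1 B_sym by metis
lemma B_smul2: "B z (smul a x) = a * B z x"
  using B_smul1 B_sym by metis
lemma B_neg2: "B z (- x) = - B z x"
  using B_neg1 B_sym by metis
lemma B_diff2: "B z (x - y) = B z x - B z y"
  using B_diff1 B_sym by metis

lemma br_add2: "br x (y + z) = br x y + br x z"
proof -
  have "B (br x (y + z) - (br x y + br x z)) w = 0" for w
    by (simp add: B_diff1 B_add1 B_inv br_add1 B_add2)
  then show ?thesis using B_nd by (metis eq_iff_diff_eq_0)
qed
lemma br_0_2[simp]: "br z 0 = 0"
  using br_add2[of z 0 0] by simp
lemma br_smul2: "br x (smul a y) = smul a (br x y)"
proof -
  have "B (br x (smul a y) - smul a (br x y)) w = 0" for w
    by (simp add: B_diff1 B_smul1 B_inv br_smul1 B_smul2)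
  then show ?thesis using B_nd by (metis eq_iff_diff_eq_0)
qed
lemma br_neg2: "br z (- x) = - br z x"
proof -
  have "br z x + br z (- x) = 0" using br_add2[of z x "-x"] by simp
  then show ?thesis by (metis neg_eq_iff_add_eq_0)
qed
lemma br_diff2: "br z (x - y) = br z x - br z y"
  using br_add2[of z x "-y"] br_neg2[of z y] by simp

lemma br_anti: "br x y = - br y x"
proof -
  have "br (x + y) (x + y) = br x y + br y x" by (simp only: br_add1 br_add2 br_xx[of x] br_xx[of y]) simp
  then have "br x y + br y x = 0" by simp
  then show ?thesis by (metis add.commute neg_eq_iff_add_eq_0)
qed

lemma jacobi2: "br x (br y z) = br (br x y) z + br y (br x z)"
proof -
  have j: "br x (br y z) + br y (br z x) + br z (br x y) = 0" by (rule jacobi)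
  have 1: "br y (br z x) = - br y (br x z)" using br_anti[of z x] br_neg2 by simp
  have 2: "br z (br x y) = - br (br x y) z" using br_anti[of z "br x y"] .
  from j have "br x (br y z) = - (br y (br z x) + br z (br x y))"
    by (metis add.assoc eq_neg_iff_add_eq_0)
  then have "br x (br y z) = - br y (br z x) - br z (br x y)" by simp
  also have "\<dots> = br y (br x z) + br (br x y) z" by (simp add: 1 2)
  finally show ?thesis by (simp add: add.commute)
qed

lemma hom1: "module_hom smul smul (\<lambda>x. br x z)"
  by (simp add: module_hom_iff V.module_axioms br_add1 br_smul1)
lemma hom2: "module_hom smul smul (\<lambda>x. br z x)"
  by (simp add: module_hom_iff V.module_axioms br_add2 br_smul2)

lemma br_sum1: "br (sum f A) z = (\<Sum>a\<in>A. br (f a) z)"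
  using module_hom.sum[OF hom1] .
lemma br_sum2: "br z (sum f A) = (\<Sum>a\<in>A. br z (f a))"
  using module_hom.sum[OF hom2] .
lemma B_sum1: "B (sum f A) z = (\<Sum>a\<in>A. B (f a) z)"
  by (induction A rule: infinite_finite_induct) (auto simp: B_add1)
lemma B_sum2: "B z (sum f A) = (\<Sum>a\<in>A. B z (f a))"
  by (induction A rule: infinite_finite_induct) (auto simp: B_add2)

end


context EA begin

abbreviation E where "E \<alpha> \<equiv> root_space smul br H \<alpha>"
abbreviation R where "R \<equiv> roots smul br H"
abbreviation z0 :: "'a \<Rightarrow> complex" where "z0 \<equiv> (\<lambda>_. 0)"
abbreviation tv where "tv \<alpha> \<equiv> tvec B H \<alpha>"

lemma E_mem: "x \<in> E \<alpha> \<longleftrightarrow> (\<forall>h\<in>H. br h x = smul (\<alpha> h) x)"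
  by (simp add: root_space_def)

lemma E_subspace: "V.subspace (E \<alpha>)"
  unfolding V.subspace_def
proof (intro conjI ballI allI)
  show "0 \<in> E \<alpha>" by (simp add: E_mem)
next
  fix x y assume "x \<in> E \<alpha>" "y \<in> E \<alpha>"
  then show "x + y \<in> E \<alpha>" by (simp add: E_mem br_add2 V.scale_right_distrib)
next
  fix c x assume x: "x \<in> E \<alpha>"
  show "smul c x \<in> E \<alpha>" unfolding E_mem
  proof
    fix h assume "h \<in> H"
    then have "br h (smul c x) = smul (c * \<alpha> h) x" using x by (simp add: E_mem br_smul2)
    also have "\<dots> = smul (\<alpha> h) (smul c x)" by (simp add: mult.commute)
    finally show "br h (smul c x) = smul (\<alpha> h) (smul c x)" .
  qed
qed

lemma H_E0: "h \<in> H \<longleftrightarrow> h \<in> E z0" using H0 by simp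

lemma H_ab: "h \<in> H \<Longrightarrow> k \<in> H \<Longrightarrow> br h k = 0"
  using H0 E_mem[of k z0] by auto

lemma br_E: assumes "x \<in> E \<alpha>" "y \<in> E \<beta>" shows "br x y \<in> E (\<lambda>h. \<alpha> h + \<beta> h)"
  unfolding E_mem
proof
  fix h assume h: "h \<in> H"
  have "br h (br x y) = br (br h x) y + br x (br h y)" by (rule jacobi2)
  also have "\<dots> = smul (\<alpha> h) (br x y) + smul (\<beta> h) (br x y)"
    using assms h by (simp add: E_mem br_smul1 br_smul2)
  finally show "br h (br x y) = smul (\<alpha> h + \<beta> h) (br x y)"
    by (simp add: V.scale_left_distrib)
qed

lemma B_E: assumes "x \<in> E \<alpha>" "y \<in> E \<beta>" "h \<in> H" "\<alpha> h + \<beta> h \<noteq> 0" shows "B x y = 0"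
proof -
  have "\<alpha> h * B x y = B (br h x) y" using assms by (simp add: E_mem B_smul1)
  also have "\<dots> = - B (br x h) y" by (metis br_anti B_neg1)
  also have "\<dots> = - B x (br h y)" by (simp add: B_inv)
  also have "\<dots> = - (\<beta> h * B x y)" using assms by (simp add: E_mem B_smul2)
  finally have "(\<alpha> h + \<beta> h) * B x y = 0" by (simp add: algebra_simps)
  then show ?thesis using assms(4) by simp
qed

lemma lf_lin: assumes "lin_functional smul H \<alpha>" "x \<in> H" "y \<in> H"
  shows "\<alpha> (smul a x + smul b y) = a * \<alpha> x + b * \<alpha> y"
  using assms(1)[unfolded lin_functional_def, THEN conjunct1, rule_format, OF assms(2,3)] .
lemma lf_add: "lin_functional smul H \<alpha> \<Longrightarrow> x \<in> H \<Longrightarrow> y \<in> H \<Longrightarrow> \<alpha> (x + y) = \<alpha> x + \<alpha> y"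
  using lf_lin[of \<alpha> x y 1 1] by simp
lemma lf_smul: "lin_functional smul H \<alpha> \<Longrightarrow> x \<in> H \<Longrightarrow> \<alpha> (smul c x) = c * \<alpha> x"
  using lf_lin[of \<alpha> x x c 0] by simp
lemma lf_out: "lin_functional smul H \<alpha> \<Longrightarrow> x \<notin> H \<Longrightarrow> \<alpha> x = 0"
  unfolding lin_functional_def by simp
lemma lf_0: "lin_functional smul H \<alpha> \<Longrightarrow> \<alpha> 0 = 0"
  using lf_smul[of \<alpha> 0 0] V.subspace_0[OF H_subspace] by simp
lemma lf_neg: "lin_functional smul H \<alpha> \<Longrightarrow> x \<in> H \<Longrightarrow> \<alpha> (- x) = - \<alpha> x"
  using lf_smul[of \<alpha> x "-1"] by (simp add: V.scale_minus_left)
lemma lf_diff: "lin_functional smul H \<alpha> \<Longrightarrow> x \<in> H \<Longrightarrow> y \<in> H \<Longrightarrow> \<alpha> (x - y) = \<alpha> x - \<alpha> y"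
  using lf_add[of \<alpha> x "-y"] lf_neg[of \<alpha> y] V.subspace_neg[OF H_subspace] by simp
lemma lf_sum: "lin_functional smul H \<alpha> \<Longrightarrow> (\<And>i. i \<in> A \<Longrightarrow> f i \<in> H) \<Longrightarrow> \<alpha> (sum f A) = (\<Sum>i\<in>A. \<alpha> (f i))"
proof (induction A rule: infinite_finite_induct)
  case (insert x F)
  then show ?case by (simp add: lf_add V.subspace_sum[OF H_subspace])
qed (auto simp: lf_0)

lemma lf_eqI: "lin_functional smul H \<alpha> \<Longrightarrow> lin_functional smul H \<beta> \<Longrightarrow> (\<And>h. h \<in> H \<Longrightarrow> \<alpha> h = \<beta> h) \<Longrightarrow> \<alpha> = \<beta>"
proof (rule ext)
  fix h assume a: "lin_functional smul H \<alpha>" "lin_functional smul H \<beta>" "\<And>h. h \<in> H \<Longrightarrow> \<alpha> h = \<beta> h"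
  show "\<alpha> h = \<beta> h" proof (cases "h \<in> H")
    case False then show ?thesis using lf_out[OF a(1)] lf_out[OF a(2)] by simp
  qed (use a in simp)
qed

lemma lf_I: "(\<And>x y a b. x \<in> H \<Longrightarrow> y \<in> H \<Longrightarrow> \<alpha> (smul a x + smul b y) = a * \<alpha> x + b * \<alpha> y)
   \<Longrightarrow> (\<And>x. x \<notin> H \<Longrightarrow> \<alpha> x = 0) \<Longrightarrow> lin_functional smul H \<alpha>"
  unfolding lin_functional_def by blast
lemma lf_negf: "lin_functional smul H \<alpha> \<Longrightarrow> lin_functional smul H (\<lambda>h. - \<alpha> h)"
  by (rule lf_I) (simp_all add: lf_lin lf_out)
lemma lf_plus: "lin_functional smul H \<alpha> \<Longrightarrow> lin_functional smul H \<beta> \<Longrightarrow> lin_functional smul H (\<lambda>h. \<alpha> h + \<beta> h)"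
  by (rule lf_I) (simp_all add: lf_lin lf_out algebra_simps)
lemma lf_scale: "lin_functional smul H \<alpha> \<Longrightarrow> lin_functional smul H (\<lambda>h. c * \<alpha> h)"
  by (rule lf_I) (simp_all add: lf_lin lf_out algebra_simps)
lemma lf_z0: "lin_functional smul H z0"
  by (rule lf_I) simp_all

lemma R_iff: "\<alpha> \<in> R \<longleftrightarrow> lin_functional smul H \<alpha> \<and> (\<exists>x\<in>E \<alpha>. x \<noteq> 0)"
proof -
  have z: "0 \<in> E \<alpha>" using V.subspace_0[OF E_subspace[of \<alpha>]] .
  have "E \<alpha> \<inter> UNIV \<noteq> {0} \<longleftrightarrow> (\<exists>x\<in>E \<alpha>. x \<noteq> 0)"
  proof
    assume "E \<alpha> \<inter> UNIV \<noteq> {0}" then show "\<exists>x\<in>E \<alpha>. x \<noteq> 0" using z by blast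
  next
    assume "\<exists>x\<in>E \<alpha>. x \<noteq> 0" then show "E \<alpha> \<inter> UNIV \<noteq> {0}" by blast
  qed
  then show ?thesis unfolding roots_in_def by simp
qed
lemma R_lf: "\<alpha> \<in> R \<Longrightarrow> lin_functional smul H \<alpha>"
  by (simp add: R_iff)
lemma R_nz: "\<alpha> \<in> R \<Longrightarrow> \<exists>x\<in>E \<alpha>. x \<noteq> 0"
  by (simp add: R_iff)
lemma R_I: "lin_functional smul H \<alpha> \<Longrightarrow> x \<in> E \<alpha> \<Longrightarrow> x \<noteq> 0 \<Longrightarrow> \<alpha> \<in> R"
  using R_iff by blast

lemma sum_nz: "sum f A \<noteq> (0::'b::comm_monoid_add) \<Longrightarrow> \<exists>a\<in>A. f a \<noteq> 0"
proof (rule ccontr)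
  assume "sum f A \<noteq> 0" "\<not> (\<exists>a\<in>A. f a \<noteq> 0)"
  then show False using sum.neutral[of A f] by blast
qed

lemma H_nd: assumes h: "h \<in> H" and o: "\<And>k. k \<in> H \<Longrightarrow> B h k = 0" shows "h = 0"
proof (rule B_nd)
  fix y
  obtain F c where F: "finite F" "\<forall>\<alpha>\<in>F. lin_functional smul H \<alpha> \<and> c \<alpha> \<in> E \<alpha>" "y = sum c F"
    using decomp[of y] by blast
  have "B h (c \<beta>) = 0" if b: "\<beta> \<in> F" for \<beta>
  proof (cases "\<beta> = z0")
    case True
    have "c \<beta> \<in> E \<beta>" using F b by blast
    with True have "c \<beta> \<in> H" using H0 by simp
    then show ?thesis using o by blast
  next
    case False
    then obtain k where k: "\<beta> k \<noteq> 0" by (meson ext)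
    have lfb: "lin_functional smul H \<beta>" using F b by blast
    have kH: "k \<in> H" using lf_out[OF lfb] k by blast
    have hz: "h \<in> E z0" using h H0 by simp
    have cb: "c \<beta> \<in> E \<beta>" using F b by blast
    show ?thesis using B_E[OF hz cb kH] k by simp
  qed
  then have "(\<Sum>\<beta>\<in>F. B h (c \<beta>)) = 0" by (rule sum.neutral[rule_format])
  then show "B h y = 0" using F(3) B_sum2 by metis
qed

lemma pair: assumes lf: "lin_functional smul H \<alpha>" and x: "x \<in> E \<alpha>" "x \<noteq> 0"
  shows "\<exists>y\<in>E (\<lambda>h. - \<alpha> h). B x y \<noteq> 0"
proof -
  obtain z where z: "B x z \<noteq> 0" using B_nd x(2) by blast
  obtain F c where F: "finite F" "\<forall>\<alpha>\<in>F. lin_functional smul H \<alpha> \<and> c \<alpha> \<in> E \<alpha>" "z = sum c F"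
    using decomp[of z] by blast
  have "B x z = (\<Sum>\<beta>\<in>F. B x (c \<beta>))" using F(3) B_sum2 by metis
  then have "(\<Sum>\<beta>\<in>F. B x (c \<beta>)) \<noteq> 0" using z by simp
  then obtain \<beta> where b: "\<beta> \<in> F" "B x (c \<beta>) \<noteq> 0" using sum_nz by blast
  have cb: "c \<beta> \<in> E \<beta>" and lfb: "lin_functional smul H \<beta>" using F b by blast+
  have "\<alpha> h + \<beta> h = 0" if "h \<in> H" for h using B_E[OF x(1) cb that] b(2) by blast
  then have "\<beta> h = - \<alpha> h" if "h \<in> H" for h using that by (simp add: eq_neg_iff_add_eq_0 add.commute)
  then have "\<beta> = (\<lambda>h. - \<alpha> h)"
    using lf_eqI[OF lfb lf_negf[OF lf]] by blast
  then show ?thesis using cb b(2) by blast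
qed

lemma br_pair_H: "x \<in> E \<alpha> \<Longrightarrow> y \<in> E (\<lambda>h. - \<alpha> h) \<Longrightarrow> br x y \<in> H"
  using br_E[of x \<alpha> y "\<lambda>h. - \<alpha> h"] H0 by simp

lemma B_h_br: "h \<in> H \<Longrightarrow> x \<in> E \<alpha> \<Longrightarrow> B h (br x y) = \<alpha> h * B x y"
proof -
  assume a: "h \<in> H" "x \<in> E \<alpha>"
  have "B h (br x y) = B (br h x) y" by (simp add: B_inv)
  also have "\<dots> = \<alpha> h * B x y" using a by (simp add: E_mem B_smul1)
  finally show ?thesis .
qed

definition has_t where "has_t \<alpha> \<longleftrightarrow> (\<exists>t\<in>H. \<forall>h\<in>H. \<alpha> h = B h t)"

lemma t_unique: "t1 \<in> H \<Longrightarrow> t2 \<in> H \<Longrightarrow> \<forall>h\<in>H. \<alpha> h = B h t1 \<Longrightarrow> \<forall>h\<in>H. \<alpha> h = B h t2 \<Longrightarrow> t1 = t2"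
proof -
  assume a: "t1 \<in> H" "t2 \<in> H" "\<forall>h\<in>H. \<alpha> h = B h t1" "\<forall>h\<in>H. \<alpha> h = B h t2"
  have "t1 - t2 = 0"
  proof (rule H_nd)
    show "t1 - t2 \<in> H" using a V.subspace_diff[OF H_subspace] by blast
    fix k assume k: "k \<in> H"
    have "B (t1 - t2) k = B k t1 - B k t2" by (simp add: B_diff2 B_sym[of _ k])
    then show "B (t1 - t2) k = 0" using a k by simp
  qed
  then show ?thesis by simp
qed

lemma tvec_eq: "t \<in> H \<Longrightarrow> \<forall>h\<in>H. \<alpha> h = B h t \<Longrightarrow> tv \<alpha> = t"
  unfolding tvec_def by (rule the_equality) (auto intro: t_unique)

lemma tvec_H: "has_t \<alpha> \<Longrightarrow> tv \<alpha> \<in> H"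
  unfolding has_t_def using tvec_eq by auto
lemma tvec_prop: "has_t \<alpha> \<Longrightarrow> h \<in> H \<Longrightarrow> \<alpha> h = B h (tv \<alpha>)"
  unfolding has_t_def using tvec_eq by auto

lemma has_t_R: assumes "\<alpha> \<in> R" shows "has_t \<alpha>"
proof -
  have lf: "lin_functional smul H \<alpha>" using assms R_lf by blast
  obtain x where x: "x \<in> E \<alpha>" "x \<noteq> 0" using R_nz assms by blast
  obtain y where y: "y \<in> E (\<lambda>h. - \<alpha> h)" "B x y \<noteq> 0" using pair lf x by blast
  define t where "t = smul (1 / B x y) (br x y)"
  have "t \<in> H" unfolding t_def using br_pair_H x y V.subspace_scale[OF H_subspace] by blast
  moreover have "\<alpha> h = B h t" if "h \<in> H" for h
    unfolding t_def using y(2) that x by (simp add: B_smul2 B_h_br)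
  ultimately show ?thesis unfolding has_t_def by blast
qed

lemma has_t_z0: "has_t z0" unfolding has_t_def using V.subspace_0[OF H_subspace] by force
lemma tvec_z0: "tv z0 = 0" using tvec_eq[of 0 z0] V.subspace_0[OF H_subspace] by simp

lemma has_t_plus: assumes "has_t \<alpha>" "has_t \<beta>" shows "has_t (\<lambda>h. \<alpha> h + \<beta> h)"
  and "tv (\<lambda>h. \<alpha> h + \<beta> h) = tv \<alpha> + tv \<beta>"
proof -
  have 1: "tv \<alpha> + tv \<beta> \<in> H" using assms tvec_H V.subspace_add[OF H_subspace] by blast
  have 2: "\<forall>h\<in>H. \<alpha> h + \<beta> h = B h (tv \<alpha> + tv \<beta>)" using assms tvec_prop by (simp add: B_add2)
  show "has_t (\<lambda>h. \<alpha> h + \<beta> h)" unfolding has_t_def using 1 2 by blast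
  show "tv (\<lambda>h. \<alpha> h + \<beta> h) = tv \<alpha> + tv \<beta>" by (rule tvec_eq[OF 1 2])
qed

lemma has_t_scale: assumes "has_t \<alpha>" shows "has_t (\<lambda>h. c * \<alpha> h)"
  and "tv (\<lambda>h. c * \<alpha> h) = smul c (tv \<alpha>)"
proof -
  have 1: "smul c (tv \<alpha>) \<in> H" using assms tvec_H V.subspace_scale[OF H_subspace] by blast
  have 2: "\<forall>h\<in>H. c * \<alpha> h = B h (smul c (tv \<alpha>))" using assms tvec_prop by (simp add: B_smul2)
  show "has_t (\<lambda>h. c * \<alpha> h)" unfolding has_t_def using 1 2 by blast
  show "tv (\<lambda>h. c * \<alpha> h) = smul c (tv \<alpha>)" by (rule tvec_eq[OF 1 2])
qed

lemma has_t_neg: assumes "has_t \<alpha>" shows "has_t (\<lambda>h. - \<alpha> h)"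
  and "tv (\<lambda>h. - \<alpha> h) = - tv \<alpha>"
  using has_t_scale[OF assms, of "-1"] by (simp_all add: V.scale_minus_left)

lemma rform_eval: "has_t \<alpha> \<Longrightarrow> has_t \<beta> \<Longrightarrow> rform B H \<alpha> \<beta> = \<alpha> (tv \<beta>)"
proof -
  assume a: "has_t \<alpha>" "has_t \<beta>"
  have "\<alpha> (tv \<beta>) = B (tv \<beta>) (tv \<alpha>)" using tvec_prop[OF a(1) tvec_H[OF a(2)]] .
  then show ?thesis unfolding rform_def by (simp add: B_sym)
qed

lemma br_pair_t: assumes "\<alpha> \<in> R" "x \<in> E \<alpha>" "y \<in> E (\<lambda>h. - \<alpha> h)"
  shows "br x y = smul (B x y) (tv \<alpha>)"
proof -
  have t: "has_t \<alpha>" using has_t_R assms by blast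
  have "br x y - smul (B x y) (tv \<alpha>) = 0"
  proof (rule H_nd)
    show "br x y - smul (B x y) (tv \<alpha>) \<in> H"
      using br_pair_H assms tvec_H[OF t] V.subspace_diff[OF H_subspace] V.subspace_scale[OF H_subspace] by blast
    fix k assume k: "k \<in> H"
    show "B (br x y - smul (B x y) (tv \<alpha>)) k = 0"
      using B_h_br[OF k assms(2), of y] tvec_prop[OF t k]
      by (simp add: B_diff1 B_smul1 B_diff2 B_smul2 B_sym[of _ k] mult.commute)
  qed
  then show ?thesis by simp
qed

end


context EA begin

lemma rform_neg: assumes "has_t \<alpha>" shows "rform B H (\<lambda>h. - \<alpha> h) (\<lambda>h. - \<alpha> h) = rform B H \<alpha> \<alpha>"
  unfolding rform_def using has_t_neg(2)[OF assms] by (simp add: B_neg1 B_neg2)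

lemma sl2:
  assumes aR: "\<alpha> \<in> R" and naR: "(\<lambda>h. - \<alpha> h) \<in> R" and an: "rform B H \<alpha> \<alpha> \<noteq> 0"
    and e: "e \<in> E \<alpha>" and f: "f \<in> E (\<lambda>h. - \<alpha> h)" and ef: "B e f = 1"
    and v: "v \<in> E (\<lambda>h. - \<alpha> h)" and ev: "B e v = 0"
  shows "v = 0"
proof -
  have ht: "has_t \<alpha>" using has_t_R aR by blast
  define t where "t = tv \<alpha>"
  have tH: "t \<in> H" unfolding t_def using tvec_H[OF ht] .
  define a where "a = \<alpha> t"
  have a0: "a \<noteq> 0" using an rform_eval[OF ht ht] unfolding a_def t_def by simp
  have naA: "(\<lambda>h. - \<alpha> h) \<in> aniso B H R"
    unfolding aniso_def using naR an rform_neg[OF ht] by simp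
  have eft: "br e f = t" using br_pair_t[OF aR e f] ef unfolding t_def by simp
  have ev0: "br e v = 0" using br_pair_t[OF aR e v] ev by simp
  define w where "w k = (br f ^^ k) v" for k
  have w0: "w 0 = v" and wS: "w (Suc k) = br f (w k)" for k unfolding w_def by simp_all
  have wE: "w k \<in> E (\<lambda>h. - of_nat (Suc k) * \<alpha> h)" for k
  proof (induction k)
    case 0 then show ?case using v w0 by simp
  next
    case (Suc k)
    have "br f (w k) \<in> E (\<lambda>h. - \<alpha> h + - of_nat (Suc k) * \<alpha> h)" using br_E[OF f Suc] by simp
    moreover have "(\<lambda>h. - \<alpha> h + - of_nat (Suc k) * \<alpha> h) = (\<lambda>h. - of_nat (Suc (Suc k)) * \<alpha> h)"
      by (rule ext) (simp add: algebra_simps)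
    ultimately show ?case using wS by simp
  qed
  have tw: "br t (w k) = smul (- of_nat (Suc k) * a) (w k)" for k
    using wE[of k] tH unfolding E_mem a_def by blast
  have step: "br e (br f u) = br t u + br f (br e u)" for u
    using jacobi2[of e f u] eft by simp
  define c where "c k = - a * of_nat (Suc k) * of_nat (Suc (Suc k)) / 2" for k
  have ew: "br e (w (Suc k)) = smul (c k) (w k)" for k
  proof (induction k)
    case 0
    have "br e (w (Suc 0)) = br t v + br f (br e v)" using step[of v] wS[of 0] w0 by simp
    also have "\<dots> = smul (- a) v" using tw[of 0] w0 ev0 by simp
    finally show ?case unfolding c_def using w0 by simp
  next
    case (Suc k)
    have "br e (w (Suc (Suc k))) = br t (w (Suc k)) + br f (br e (w (Suc k)))"
      using step[of "w (Suc k)"] wS[of "Suc k"] by simp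
    also have "\<dots> = smul (- of_nat (Suc (Suc k)) * a) (w (Suc k)) + smul (c k) (w (Suc k))"
      using tw[of "Suc k"] Suc wS[of k] by (simp add: br_smul2)
    also have "\<dots> = smul (- of_nat (Suc (Suc k)) * a + c k) (w (Suc k))"
      by (simp add: V.scale_left_distrib)
    also have "- of_nat (Suc (Suc k)) * a + c k = c (Suc k)"
      unfolding c_def by (simp add: field_simps)
    finally show ?case .
  qed
  have cnz: "c k \<noteq> 0" for k unfolding c_def using a0 by (simp del: of_nat_Suc)
  obtain n where n: "(br f ^^ n) v = 0" using nilp[OF naA f, of v] by blast
  have "w (n - m) = 0" if "m \<le> n" for m
    using that
  proof (induction m)
    case 0 then show ?case using n unfolding w_def by simp
  next
    case (Suc m)
    then have "w (n - m) = 0" by simp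
    moreover have "n - m = Suc (n - Suc m)" using Suc.prems by simp
    ultimately have "br e (w (Suc (n - Suc m))) = 0" by simp
    then have "smul (c (n - Suc m)) (w (n - Suc m)) = 0" using ew by simp
    then show ?case using cnz by simp
  qed
  from this[of n] have "w 0 = 0" by simp
  then show ?thesis using w0 by simp
qed

lemma E_line:
  assumes aR: "\<alpha> \<in> R" and naR: "(\<lambda>h. - \<alpha> h) \<in> R" and an: "rform B H \<alpha> \<alpha> \<noteq> 0"
  shows "\<exists>f. E (\<lambda>h. - \<alpha> h) \<subseteq> V.span {f}"
proof -
  obtain e where e: "e \<in> E \<alpha>" "e \<noteq> 0" using R_nz aR by blast
  obtain f0 where f0: "f0 \<in> E (\<lambda>h. - \<alpha> h)" "B e f0 \<noteq> 0" using pair[OF R_lf[OF aR] e] by blast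
  define f where "f = smul (1 / B e f0) f0"
  have f: "f \<in> E (\<lambda>h. - \<alpha> h)" unfolding f_def using f0 V.subspace_scale[OF E_subspace] by blast
  have ef: "B e f = 1" unfolding f_def using f0 by (simp add: B_smul2)
  have "v \<in> V.span {f}" if v: "v \<in> E (\<lambda>h. - \<alpha> h)" for v
  proof -
    have v'E: "v - smul (B e v) f \<in> E (\<lambda>h. - \<alpha> h)"
      using v f V.subspace_diff[OF E_subspace] V.subspace_scale[OF E_subspace] by blast
    have "B e (v - smul (B e v) f) = 0" using ef by (simp add: B_diff2 B_smul2)
    then have "v - smul (B e v) f = 0" using sl2[OF aR naR an e(1) f ef v'E] by blast
    then have "v = smul (B e v) f" by simp
    moreover have "smul (B e v) f \<in> V.span {f}" using V.span_scale[OF V.span_base[of f "{f}"]] by simp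
    ultimately show ?thesis by simp
  qed
  then show ?thesis by blast
qed

end


locale EAR = EA smul br B H
  for smul :: "complex \<Rightarrow> 'a::ab_group_add \<Rightarrow> 'a" and br B H +
  fixes R' :: "('a \<Rightarrow> complex) set"
  assumes sub: "subsystem smul B H (roots smul br H) R'"
    and cl: "closed_sub (roots smul br H) R'"
    and fin: "finite R'"
begin

lemma R'R: "R' \<subseteq> R" using sub unfolding subsystem_def by blast
lemma ears': "ears smul B H R'" using sub unfolding subsystem_def by blast

lemma e_real: "v \<in> rspan R' \<Longrightarrow> w \<in> rspan R' \<Longrightarrow> Im (rform B H v w) = 0"
  using ears'[unfolded ears_def, THEN conjunct1, rule_format] .
lemma e_psd: "v \<in> rspan R' \<Longrightarrow> Re (rform B H v v) \<ge> 0"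
  using ears'[unfolded ears_def, THEN conjunct2, THEN conjunct1, rule_format] .
lemma z0R': "z0 \<in> R'"
  using ears'[unfolded ears_def, THEN conjunct2, THEN conjunct2, THEN conjunct1] .
lemma negR': "\<alpha> \<in> R' \<Longrightarrow> (\<lambda>h. - \<alpha> h) \<in> R'"
  using ears'[unfolded ears_def, THEN conjunct2, THEN conjunct2, THEN conjunct2, THEN conjunct1, rule_format] .
lemma strings: "\<alpha> \<in> aniso B H R' \<Longrightarrow> \<beta> \<in> R' \<Longrightarrow> \<exists>d u :: nat.
        {k :: int. (\<lambda>h. \<beta> h + of_int k * \<alpha> h) \<in> R'} = {- int d .. int u} \<and>
        2 * rform B H \<beta> \<alpha> / rform B H \<alpha> \<alpha> = of_int (int d - int u)"
  using ears'[unfolded ears_def, THEN conjunct2, THEN conjunct2, THEN conjunct2, THEN conjunct2,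
     THEN conjunct2, THEN conjunct2, THEN conjunct1, rule_format] .
lemma noniso: "nonisolated B H R'"
  using ears'[unfolded ears_def, THEN conjunct2, THEN conjunct2, THEN conjunct2, THEN conjunct2,
     THEN conjunct2, THEN conjunct2, THEN conjunct2, THEN conjunct1] .
lemma conn: "connected_roots B H R'"
  using ears'[unfolded ears_def, THEN conjunct2, THEN conjunct2, THEN conjunct2, THEN conjunct2,
     THEN conjunct2, THEN conjunct2, THEN conjunct2, THEN conjunct2] .

lemma htR': "\<alpha> \<in> R' \<Longrightarrow> has_t \<alpha>" using R'R has_t_R by blast

lemma rspan_base: "\<alpha> \<in> S \<Longrightarrow> \<alpha> \<in> rspan S"
proof -
  assume a: "\<alpha> \<in> S"
  have "\<alpha> = (\<lambda>h. \<Sum>\<beta>\<in>{\<alpha>}. complex_of_real ((\<lambda>_. 1) \<beta>) * \<beta> h)" by simp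
  then show ?thesis unfolding rspan_def mem_Collect_eq using a
    by (intro exI[of _ "{\<alpha>}"] exI[of _ "\<lambda>_. 1::real"]) simp
qed

lemma rspan2: assumes "\<alpha> \<in> S" "\<beta> \<in> S"
  shows "(\<lambda>h. complex_of_real r * \<alpha> h + \<beta> h) \<in> rspan S"
proof (cases "\<alpha> = \<beta>")
  case True
  have "(\<lambda>h. complex_of_real r * \<alpha> h + \<beta> h) = (\<lambda>h. \<Sum>\<gamma>\<in>{\<alpha>}. complex_of_real ((\<lambda>_. r + 1) \<gamma>) * \<gamma> h)"
    using True by (simp add: algebra_simps)
  then show ?thesis unfolding rspan_def mem_Collect_eq using assms
    by (intro exI[of _ "{\<alpha>}"] exI[of _ "\<lambda>_. r + 1"]) simp
next
  case False
  have "(\<lambda>h. complex_of_real r * \<alpha> h + \<beta> h) = (\<lambda>h. \<Sum>\<gamma>\<in>{\<alpha>, \<beta>}. complex_of_real ((\<lambda>\<gamma>. if \<gamma> = \<alpha> then r else 1) \<gamma>) * \<gamma> h)"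
    using False by simp
  then show ?thesis unfolding rspan_def mem_Collect_eq using assms
    by (intro exI[of _ "{\<alpha>, \<beta>}"] exI[of _ "\<lambda>\<gamma>. if \<gamma> = \<alpha> then r else 1"]) simp
qed

lemma rform_sym: "rform B H \<alpha> \<beta> = rform B H \<beta> \<alpha>"
  unfolding rform_def by (rule B_sym)

lemma iso_orth: assumes d: "\<delta> \<in> R'" "rform B H \<delta> \<delta> = 0" and a: "\<alpha> \<in> R'"
  shows "rform B H \<delta> \<alpha> = 0"
proof -
  have hd: "has_t \<delta>" and ha: "has_t \<alpha>" using d a htR' by blast+
  define x where "x = Re (rform B H \<delta> \<alpha>)"
  have im: "Im (rform B H \<delta> \<alpha>) = 0" using e_real[OF rspan_base rspan_base] d a by blast
  have q: "Re (rform B H (\<lambda>h. complex_of_real r * \<delta> h + \<alpha> h) (\<lambda>h. complex_of_real r * \<delta> h + \<alpha> h))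
           = 2 * r * x + Re (rform B H \<alpha> \<alpha>)" for r
  proof -
    have t: "tv (\<lambda>h. complex_of_real r * \<delta> h + \<alpha> h) = smul (complex_of_real r) (tv \<delta>) + tv \<alpha>"
      using has_t_plus(2)[OF has_t_scale(1)[OF hd] ha] has_t_scale(2)[OF hd] by simp
    have "rform B H (\<lambda>h. complex_of_real r * \<delta> h + \<alpha> h) (\<lambda>h. complex_of_real r * \<delta> h + \<alpha> h)
      = complex_of_real r * complex_of_real r * rform B H \<delta> \<delta> + complex_of_real r * rform B H \<delta> \<alpha>
        + complex_of_real r * rform B H \<alpha> \<delta> + rform B H \<alpha> \<alpha>"
      unfolding rform_def t by (simp add: B_add1 B_add2 B_smul1 B_smul2 algebra_simps)
    also have "\<dots> = 2 * complex_of_real r * rform B H \<delta> \<alpha> + rform B H \<alpha> \<alpha>"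
      using d(2) rform_sym[of \<alpha> \<delta>] by simp
    finally show ?thesis unfolding x_def by simp
  qed
  have x0: "x = 0"
  proof (rule ccontr)
    assume "x \<noteq> 0"
    define r where "r = - (Re (rform B H \<alpha> \<alpha>) + 1) / (2 * x)"
    have "2 * r * x + Re (rform B H \<alpha> \<alpha>) = -1" unfolding r_def using \<open>x \<noteq> 0\<close> by (simp add: field_simps)
    moreover have "Re (rform B H (\<lambda>h. complex_of_real r * \<delta> h + \<alpha> h) (\<lambda>h. complex_of_real r * \<delta> h + \<alpha> h)) \<ge> 0"
      using e_psd[OF rspan2[OF d(1) a]] .
    ultimately show False using q[of r] by simp
  qed
  show ?thesis using x0 im unfolding x_def by (simp add: complex_eq_iff)
qed

lemma no_iso: assumes d: "\<delta> \<in> R'" "rform B H \<delta> \<delta> = 0" shows "\<delta> = z0"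
proof (rule ccontr)
  assume dnz: "\<delta> \<noteq> z0"
  have "\<delta> \<in> R' - aniso B H R'" using d unfolding aniso_def by simp
  then obtain \<alpha> where a: "\<alpha> \<in> aniso B H R'" "(\<lambda>h. \<alpha> h + \<delta> h) \<in> aniso B H R'"
    using noniso unfolding nonisolated_def by blast
  have aR: "\<alpha> \<in> R'" and an: "rform B H \<alpha> \<alpha> \<noteq> 0" using a unfolding aniso_def by simp_all
  have hd: "has_t \<delta>" and ha: "has_t \<alpha>" using d aR htR' by blast+
  define g where "g k = (\<lambda>h. \<alpha> h + of_nat k * \<delta> h)" for k
  have hg: "has_t (g k)" for k unfolding g_def using has_t_plus(1)[OF ha has_t_scale(1)[OF hd]] by blast
  have tg: "tv (g k) = tv \<alpha> + smul (of_nat k) (tv \<delta>)" for k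
    unfolding g_def using has_t_plus(2)[OF ha has_t_scale(1)[OF hd]] has_t_scale(2)[OF hd] by simp
  have dd: "B (tv \<delta>) (tv \<delta>) = 0" using d(2) unfolding rform_def .
  have da: "B (tv \<delta>) (tv \<alpha>) = 0" using iso_orth[OF d aR] unfolding rform_def .
  have ad: "B (tv \<alpha>) (tv \<delta>) = 0" using da B_sym by metis
  have rg: "rform B H (g i) (g j) = rform B H \<alpha> \<alpha>" for i j
    unfolding rform_def tg by (simp add: B_add1 B_add2 B_smul1 B_smul2 dd da ad)
  have g0: "g 0 = \<alpha>" unfolding g_def by simp
  have g1: "g 1 = (\<lambda>h. \<alpha> h + \<delta> h)" unfolding g_def by simp
  have gR: "g k \<in> R' \<and> g (Suc k) \<in> R'" for k
  proof (induction k)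
    case 0 then show ?case using g0 g1 aR a(2) unfolding aniso_def by simp
  next
    case (Suc k)
    have ga: "g (Suc k) \<in> aniso B H R'" using Suc rg an unfolding aniso_def by simp
    obtain d u :: nat where du: "{m :: int. (\<lambda>h. g k h + of_int m * g (Suc k) h) \<in> R'} = {- int d .. int u}"
      "2 * rform B H (g k) (g (Suc k)) / rform B H (g (Suc k)) (g (Suc k)) = of_int (int d - int u)"
      using strings[OF ga] Suc by blast
    have "2 * rform B H (g k) (g (Suc k)) / rform B H (g (Suc k)) (g (Suc k)) = 2"
      using rg an by simp
    then have "int d - int u = 2" using du(2) by (metis of_int_eq_iff of_int_numeral)
    then have "(- 2 :: int) \<in> {- int d .. int u}" by simp
    then have "(\<lambda>h. g k h + of_int (- 2) * g (Suc k) h) \<in> R'" using du(1) by blast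
    then have "(\<lambda>h. - (g k h + of_int (- 2) * g (Suc k) h)) \<in> R'" by (rule negR')
    moreover have "(\<lambda>h. - (g k h + of_int (- 2) * g (Suc k) h)) = g (Suc (Suc k))"
      unfolding g_def by (rule ext) (simp add: algebra_simps)
    ultimately show ?case using Suc by simp
  qed
  obtain h0 where h0: "\<delta> h0 \<noteq> 0" using dnz by (meson ext)
  have "inj g"
  proof (rule injI)
    fix i j assume "g i = g j"
    then have "g i h0 = g j h0" by simp
    then have "of_nat i * \<delta> h0 = of_nat j * \<delta> h0" unfolding g_def by simp
    then show "i = j" using h0 by simp
  qed
  moreover have "range g \<subseteq> R'" using gR by blast
  ultimately show False using fin range_inj_infinite finite_subset by metis
qed

lemma aniso_R': "aniso B H R' = R' - {z0}"
proof -
  have "rform B H z0 z0 = 0" unfolding rform_def tvec_z0 by simp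
  then show ?thesis unfolding aniso_def using no_iso by blast
qed

end


context EAR begin

definition "X = tv ` R'"
definition "Aset = R' - {z0}"
definition "rflx \<alpha> x = x - smul (2 * \<alpha> x / rform B H \<alpha> \<alpha>) (tv \<alpha>)"

lemma A_facts: assumes "\<alpha> \<in> Aset"
  shows "\<alpha> \<in> R'" "\<alpha> \<in> R" "has_t \<alpha>" "rform B H \<alpha> \<alpha> \<noteq> 0" "lin_functional smul H \<alpha>"
    "tv \<alpha> \<in> H" "\<alpha> (tv \<alpha>) = rform B H \<alpha> \<alpha>"
proof -
  show a: "\<alpha> \<in> R'" using assms unfolding Aset_def by simp
  show b: "\<alpha> \<in> R" using a R'R by blast
  show c: "has_t \<alpha>" using b has_t_R by blast
  show "rform B H \<alpha> \<alpha> \<noteq> 0" using assms aniso_R' unfolding Aset_def aniso_def by blast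
  show "lin_functional smul H \<alpha>" using b R_lf by blast
  show "tv \<alpha> \<in> H" using c tvec_H by blast
  show "\<alpha> (tv \<alpha>) = rform B H \<alpha> \<alpha>" using rform_eval[OF c c] by simp
qed

lemma X_H: "X \<subseteq> H" unfolding X_def using htR' tvec_H by blast

lemma rflx_H: assumes a: "\<alpha> \<in> Aset" and x: "x \<in> H" shows "rflx \<alpha> x \<in> H"
proof -
  have tH: "tv \<alpha> \<in> H" by (rule A_facts(6)[OF a])
  show ?thesis unfolding rflx_def
    by (rule V.subspace_diff[OF H_subspace x V.subspace_scale[OF H_subspace tH]])
qed

lemma rflx_add: assumes a: "\<alpha> \<in> Aset" and x: "x \<in> H" and y: "y \<in> H"
  shows "rflx \<alpha> (x + y) = rflx \<alpha> x + rflx \<alpha> y"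
proof -
  have lf: "lin_functional smul H \<alpha>" by (rule A_facts(5)[OF a])
  define a where "a = rform B H \<alpha> \<alpha>"
  have e: "2 * \<alpha> (x + y) / a = 2 * \<alpha> x / a + 2 * \<alpha> y / a"
    unfolding lf_add[OF lf x y] by (simp add: add_divide_distrib distrib_left)
  show ?thesis unfolding rflx_def a_def[symmetric] e V.scale_left_distrib by (simp add: algebra_simps)
qed

lemma rflx_smul: assumes a: "\<alpha> \<in> Aset" and x: "x \<in> H"
  shows "rflx \<alpha> (smul c x) = smul c (rflx \<alpha> x)"
proof -
  have lf: "lin_functional smul H \<alpha>" by (rule A_facts(5)[OF a])
  define a where "a = rform B H \<alpha> \<alpha>"
  have e: "2 * \<alpha> (smul c x) / a = c * (2 * \<alpha> x / a)"
    unfolding lf_smul[OF lf x] by simp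
  show ?thesis unfolding rflx_def a_def[symmetric] e V.scale_right_diff_distrib V.scale_scale ..
qed

lemma rflx_neg: "\<alpha> \<in> Aset \<Longrightarrow> x \<in> H \<Longrightarrow> rflx \<alpha> (- x) = - rflx \<alpha> x"
  using rflx_smul[of \<alpha> x "-1"] by (simp add: V.scale_minus_left)

lemma rflx_fix: "\<alpha> x = 0 \<Longrightarrow> rflx \<alpha> x = x"
  unfolding rflx_def by simp

lemma rflx_self: "\<alpha> \<in> Aset \<Longrightarrow> rflx \<alpha> (tv \<alpha>) = - tv \<alpha>"
proof -
  assume a: "\<alpha> \<in> Aset"
  have "2 * \<alpha> (tv \<alpha>) / rform B H \<alpha> \<alpha> = 2" using A_facts[OF a] by simp
  then have "rflx \<alpha> (tv \<alpha>) = tv \<alpha> - smul 2 (tv \<alpha>)" unfolding rflx_def by simp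
  also have "\<dots> = - tv \<alpha>" using V.scale_left_distrib[of 1 1 "tv \<alpha>"] by simp
  finally show ?thesis .
qed

lemma rflx_inv: assumes a: "\<alpha> \<in> Aset" and x: "x \<in> H" shows "rflx \<alpha> (rflx \<alpha> x) = x"
proof -
  note f = A_facts[OF a]
  define c where "c = 2 * \<alpha> x / rform B H \<alpha> \<alpha>"
  have r: "rflx \<alpha> x = x - smul c (tv \<alpha>)" unfolding rflx_def c_def by simp
  have "\<alpha> (rflx \<alpha> x) = \<alpha> x - c * rform B H \<alpha> \<alpha>"
    unfolding r using f x by (simp add: lf_diff lf_smul V.subspace_scale[OF H_subspace])
  also have "\<dots> = - \<alpha> x" unfolding c_def using f by simp
  finally have e: "\<alpha> (rflx \<alpha> x) = - \<alpha> x" .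
  have "rflx \<alpha> (rflx \<alpha> x) = rflx \<alpha> x - smul (- c) (tv \<alpha>)"
    unfolding rflx_def[of \<alpha> "rflx \<alpha> x"] e c_def by simp
  also have "\<dots> = x" unfolding r by (simp add: V.scale_minus_left)
  finally show ?thesis .
qed

lemma rflx_X: assumes a: "\<alpha> \<in> Aset" and g: "\<gamma> \<in> R'" shows "rflx \<alpha> (tv \<gamma>) \<in> X"
proof -
  note f = A_facts[OF a]
  have aA: "\<alpha> \<in> aniso B H R'" using f unfolding aniso_def by simp
  obtain d u :: nat where du: "{k :: int. (\<lambda>h. \<gamma> h + of_int k * \<alpha> h) \<in> R'} = {- int d .. int u}"
    "2 * rform B H \<gamma> \<alpha> / rform B H \<alpha> \<alpha> = of_int (int d - int u)"
    using strings[OF aA g] by metis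
  have "int u - int d \<in> {- int d .. int u}" by simp
  then have "int u - int d \<in> {k :: int. (\<lambda>h. \<gamma> h + of_int k * \<alpha> h) \<in> R'}" by (simp only: du(1))
  then have inR: "(\<lambda>h. \<gamma> h + of_int (int u - int d) * \<alpha> h) \<in> R'" by (rule CollectD)
  have hg: "has_t \<gamma>" using g htR' by blast
  have T1: "tv (\<lambda>h. \<gamma> h + of_int (int u - int d) * \<alpha> h) = tv \<gamma> + smul (of_int (int u - int d)) (tv \<alpha>)"
    using has_t_plus(2)[OF hg has_t_scale(1)[OF f(3)]] has_t_scale(2)[OF f(3)] by simp
  have "\<alpha> (tv \<gamma>) = rform B H \<gamma> \<alpha>" using rform_eval[OF f(3) hg] rform_sym[of \<alpha> \<gamma>] by simp
  then have c: "2 * \<alpha> (tv \<gamma>) / rform B H \<alpha> \<alpha> = - of_int (int u - int d)" using du(2) by simp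
  have "rflx \<alpha> (tv \<gamma>) = tv \<gamma> - smul (- of_int (int u - int d)) (tv \<alpha>)"
    unfolding rflx_def c by simp
  also have "\<dots> = tv \<gamma> + smul (of_int (int u - int d)) (tv \<alpha>)"
    unfolding V.scale_minus_left by simp
  finally have "rflx \<alpha> (tv \<gamma>) = tv (\<lambda>h. \<gamma> h + of_int (int u - int d) * \<alpha> h)" using T1 by simp
  then show ?thesis unfolding X_def using imageI[OF inR, of tv] by simp
qed

lemma rflx_X': "\<alpha> \<in> Aset \<Longrightarrow> x \<in> X \<Longrightarrow> rflx \<alpha> x \<in> X"
proof -
  assume a: "\<alpha> \<in> Aset" "x \<in> X"
  then obtain \<gamma> where "\<gamma> \<in> R'" "x = tv \<gamma>" unfolding X_def by blast
  then show ?thesis using rflx_X[OF a(1)] by simp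
qed

definition "Ls = {l. set l \<subseteq> Aset}"

lemma fold_props: assumes "l \<in> Ls"
  shows "\<And>x. x \<in> H \<Longrightarrow> fold rflx l x \<in> H"
    and "\<And>x y. x \<in> H \<Longrightarrow> y \<in> H \<Longrightarrow> fold rflx l (x + y) = fold rflx l x + fold rflx l y"
    and "\<And>x c. x \<in> H \<Longrightarrow> fold rflx l (smul c x) = smul c (fold rflx l x)"
    and "\<And>x. x \<in> X \<Longrightarrow> fold rflx l x \<in> X"
    and "\<And>x. x \<in> H \<Longrightarrow> (\<forall>\<alpha>\<in>Aset. \<alpha> x = 0) \<Longrightarrow> fold rflx l x = x"
  using assms unfolding Ls_def
proof (induction l)
  case (Cons a l)
  { case 1 then show ?case using Cons rflx_H by simp }
  { case 2 then show ?case using Cons rflx_H rflx_add by simp }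
  { case 3 then show ?case using Cons rflx_H rflx_smul by simp }
  { case 4 then show ?case using Cons rflx_X' by simp }
  { case 5 then show ?case using Cons rflx_fix by simp }
qed simp_all

lemma fold_neg: "l \<in> Ls \<Longrightarrow> x \<in> H \<Longrightarrow> fold rflx l (- x) = - fold rflx l x"
  using fold_props(3)[of l x "-1"] by (simp add: V.scale_minus_left)

definition "Om = (\<lambda>l. restrict (fold rflx l) X) ` Ls"
definition "Lsel \<sigma> = (SOME l. l \<in> Ls \<and> \<sigma> = restrict (fold rflx l) X)"
definition "P x = (\<Sum>\<sigma>\<in>Om. fold rflx (Lsel \<sigma>) x)"

lemma Om_E: assumes "\<sigma> \<in> Om" obtains l where "l \<in> Ls" "\<sigma> = restrict (fold rflx l) X"
  using assms unfolding Om_def by blast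

lemma Lsel: assumes s: "\<sigma> \<in> Om" shows "Lsel \<sigma> \<in> Ls \<and> \<sigma> = restrict (fold rflx (Lsel \<sigma>)) X"
proof -
  obtain l where l: "l \<in> Ls" "\<sigma> = restrict (fold rflx l) X" using s by (rule Om_E)
  show ?thesis unfolding Lsel_def by (rule someI[of "\<lambda>l. l \<in> Ls \<and> \<sigma> = restrict (fold rflx l) X" l]) (use l in simp)
qed

lemma Lsel_Ls: "\<sigma> \<in> Om \<Longrightarrow> Lsel \<sigma> \<in> Ls" using Lsel by blast

lemma Om_fin: "finite Om"
proof -
  have "\<sigma> \<in> Pi\<^sub>E X (\<lambda>_. X)" if s: "\<sigma> \<in> Om" for \<sigma>
  proof -
    obtain l where l: "l \<in> Ls" "\<sigma> = restrict (fold rflx l) X" using s by (rule Om_E)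
    show ?thesis unfolding l(2) restrict_PiE_iff using fold_props(4)[OF l(1)] by blast
  qed
  then have "Om \<subseteq> Pi\<^sub>E X (\<lambda>_. X)" by blast
  moreover have "finite X" unfolding X_def using fin by simp
  ultimately show ?thesis using finite_subset[of Om "Pi\<^sub>E X (\<lambda>_. X)"] finite_PiE[of X "\<lambda>_. X"] by simp
qed

lemma Om_ne: "restrict id X \<in> Om"
proof -
  have "[] \<in> Ls" unfolding Ls_def by simp
  then have "restrict (fold rflx []) X \<in> Om" unfolding Om_def by (rule imageI)
  then show ?thesis by simp
qed

lemma P_H: "x \<in> H \<Longrightarrow> P x \<in> H"
  unfolding P_def by (rule V.subspace_sum[OF H_subspace]) (use fold_props(1) Lsel_Ls in blast)

lemma P_add: assumes x: "x \<in> H" and y: "y \<in> H" shows "P (x + y) = P x + P y"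
proof -
  have "P (x + y) = (\<Sum>\<sigma>\<in>Om. fold rflx (Lsel \<sigma>) x + fold rflx (Lsel \<sigma>) y)"
    unfolding P_def
  proof (rule sum.cong)
    fix \<sigma> assume s: "\<sigma> \<in> Om"
    show "fold rflx (Lsel \<sigma>) (x + y) = fold rflx (Lsel \<sigma>) x + fold rflx (Lsel \<sigma>) y"
      using fold_props(2)[of "Lsel \<sigma>" x y] Lsel_Ls[OF s] x y by simp
  qed simp
  then show ?thesis unfolding P_def by (simp add: sum.distrib)
qed

lemma P_smul: assumes x: "x \<in> H" shows "P (smul c x) = smul c (P x)"
proof -
  have "P (smul c x) = (\<Sum>\<sigma>\<in>Om. smul c (fold rflx (Lsel \<sigma>) x))"
    unfolding P_def
  proof (rule sum.cong)
    fix \<sigma> assume s: "\<sigma> \<in> Om"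
    show "fold rflx (Lsel \<sigma>) (smul c x) = smul c (fold rflx (Lsel \<sigma>) x)"
      using fold_props(3)[of "Lsel \<sigma>" x c] Lsel_Ls[OF s] x by simp
  qed simp
  then show ?thesis unfolding P_def by (simp add: V.scale_sum_right)
qed

lemma Om_app: assumes s: "\<sigma> \<in> Om" and x: "x \<in> X" shows "\<sigma> x = fold rflx (Lsel \<sigma>) x"
proof -
  have e: "\<sigma> = restrict (fold rflx (Lsel \<sigma>)) X" using Lsel[OF s] by blast
  have "\<sigma> x = restrict (fold rflx (Lsel \<sigma>)) X x" using arg_cong[where f="\<lambda>f. f x", OF e] .
  then show ?thesis using x by simp
qed

lemma P_tv: assumes a: "\<alpha> \<in> Aset" shows "P (tv \<alpha>) = 0"
proof -
  note f = A_facts[OF a]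
  have tX: "tv \<alpha> \<in> X" unfolding X_def using f(1) by (rule imageI)
  have ntX: "- tv \<alpha> \<in> X"
  proof -
    have "tv (\<lambda>h. - \<alpha> h) \<in> X" unfolding X_def using negR'[OF f(1)] by (rule imageI)
    then show ?thesis using has_t_neg(2)[OF f(3)] by simp
  qed
  define S where "S = (\<Sum>\<sigma>\<in>Om. \<sigma> (tv \<alpha>))"
  have PS: "P (tv \<alpha>) = S" unfolding P_def S_def
  proof (rule sum.cong)
    fix \<sigma> assume "\<sigma> \<in> Om"
    then show "fold rflx (Lsel \<sigma>) (tv \<alpha>) = \<sigma> (tv \<alpha>)" using Om_app tX by simp
  qed simp
  define \<phi> where "\<phi> \<sigma> = restrict (\<lambda>x. \<sigma> (rflx \<alpha> x)) X" for \<sigma> :: "'a \<Rightarrow> 'a"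
  have phiOm: "\<phi> \<sigma> \<in> Om" if s: "\<sigma> \<in> Om" for \<sigma>
  proof -
    obtain l where l: "l \<in> Ls" "\<sigma> = restrict (fold rflx l) X" using s by (rule Om_E)
    have "\<phi> \<sigma> = restrict (fold rflx (\<alpha> # l)) X"
      unfolding \<phi>_def l(2) by (rule restrict_ext) (simp add: rflx_X'[OF a])
    moreover have "\<alpha> # l \<in> Ls" using l a unfolding Ls_def by simp
    ultimately show ?thesis unfolding Om_def using image_eqI[of "\<phi> \<sigma>" "\<lambda>l. restrict (fold rflx l) X" "\<alpha> # l" Ls] by blast
  qed
  have phiphi: "\<phi> (\<phi> \<sigma>) = \<sigma>" if s: "\<sigma> \<in> Om" for \<sigma>
  proof -
    obtain l where l: "l \<in> Ls" "\<sigma> = restrict (fold rflx l) X" using s by (rule Om_E)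
    show ?thesis unfolding \<phi>_def l(2)
    proof (rule ext)
      fix x
      show "restrict (\<lambda>x. restrict (\<lambda>x. restrict (fold rflx l) X (rflx \<alpha> x)) X (rflx \<alpha> x)) X x
          = restrict (fold rflx l) X x"
      proof (cases "x \<in> X")
        case True
        have 1: "rflx \<alpha> x \<in> X" using rflx_X'[OF a True] .
        have 2: "rflx \<alpha> (rflx \<alpha> x) = x" using rflx_inv[OF a] True X_H by blast
        show ?thesis using True 1 2 by simp
      qed simp
    qed
  qed
  have "S = (\<Sum>\<sigma>\<in>Om. \<phi> \<sigma> (tv \<alpha>))" unfolding S_def
    by (rule sum.reindex_bij_witness[of _ \<phi> \<phi>]) (simp_all add: phiOm phiphi)
  also have "\<dots> = (\<Sum>\<sigma>\<in>Om. \<sigma> (- tv \<alpha>))" unfolding \<phi>_def using tX rflx_self[OF a] by simp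
  also have "\<dots> = (\<Sum>\<sigma>\<in>Om. - \<sigma> (tv \<alpha>))"
  proof (rule sum.cong)
    fix \<sigma> assume s: "\<sigma> \<in> Om"
    have "\<sigma> (- tv \<alpha>) = fold rflx (Lsel \<sigma>) (- tv \<alpha>)" using Om_app[OF s ntX] .
    also have "\<dots> = - fold rflx (Lsel \<sigma>) (tv \<alpha>)" using fold_neg[OF Lsel_Ls[OF s] f(6)] .
    also have "\<dots> = - \<sigma> (tv \<alpha>)" using Om_app[OF s tX] by simp
    finally show "\<sigma> (- tv \<alpha>) = - \<sigma> (tv \<alpha>)" .
  qed simp
  also have "\<dots> = - S" unfolding S_def by (simp add: sum_negf)
  finally have SS: "S = - S" .
  have "smul 2 S = S + S" using V.scale_left_distrib[of 1 1 S] by simp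
  also have "\<dots> = S + - S" using SS by (rule arg_cong)
  also have "\<dots> = 0" by simp
  finally have "smul 2 S = 0" .
  then have "S = 0" by simp
  then show ?thesis using PS by simp
qed

lemma P_sub: "V.subspace {x. x \<in> H \<and> P x = 0}"
  unfolding V.subspace_def
proof (intro conjI ballI allI)
  show "0 \<in> {x. x \<in> H \<and> P x = 0}"
    using P_smul[of 0 0] V.subspace_0[OF H_subspace] by simp
next
  fix x y assume "x \<in> {x. x \<in> H \<and> P x = 0}" "y \<in> {x. x \<in> H \<and> P x = 0}"
  then show "x + y \<in> {x. x \<in> H \<and> P x = 0}" using P_add V.subspace_add[OF H_subspace] by simp
next
  fix c x assume "x \<in> {x. x \<in> H \<and> P x = 0}"
  then show "smul c x \<in> {x. x \<in> H \<and> P x = 0}" using P_smul V.subspace_scale[OF H_subspace] by simp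
qed

lemma P_span: assumes x: "x \<in> V.span X" shows "x \<in> H \<and> P x = 0"
proof -
  have "x \<in> {x. x \<in> H \<and> P x = 0}"
  proof (rule V.span_minimal[OF _ P_sub, THEN subsetD, OF _ x])
    show "X \<subseteq> {x. x \<in> H \<and> P x = 0}"
    proof
      fix x assume "x \<in> X"
      then obtain \<gamma> where g: "\<gamma> \<in> R'" "x = tv \<gamma>" unfolding X_def by blast
      show "x \<in> {x. x \<in> H \<and> P x = 0}"
      proof (cases "\<gamma> = z0")
        case True
        then have "x = 0" using g tvec_z0 by simp
        then show ?thesis using P_smul[of 0 0] V.subspace_0[OF H_subspace] by simp
      next
        case False
        then have "\<gamma> \<in> Aset" using g unfolding Aset_def by simp
        then show ?thesis using P_tv A_facts(6) g by simp
      qed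
    qed
  qed
  then show ?thesis by simp
qed

lemma T_nd: assumes x: "x \<in> V.span X" and o: "\<And>y. y \<in> V.span X \<Longrightarrow> B x y = 0" shows "x = 0"
proof -
  have xH: "x \<in> H" and P0: "P x = 0" using P_span[OF x] by simp_all
  have "\<alpha> x = 0" if a: "\<alpha> \<in> Aset" for \<alpha>
  proof -
    have "tv \<alpha> \<in> X" unfolding X_def using A_facts(1)[OF a] by (rule imageI)
    then have "tv \<alpha> \<in> V.span X" by (rule V.span_base)
    then show ?thesis using tvec_prop[OF A_facts(3)[OF a] xH] o by simp
  qed
  then have fx: "fold rflx (Lsel \<sigma>) x = x" if "\<sigma> \<in> Om" for \<sigma>
    using fold_props(5)[OF Lsel_Ls[OF that] xH] by blast
  have "P x = (\<Sum>\<sigma>\<in>Om. x)" unfolding P_def by (rule sum.cong) (simp_all add: fx)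
  also have "\<dots> = smul (of_nat (card Om)) x" by (rule V.sum_constant_scale)
  finally have "smul (of_nat (card Om)) x = 0" using P0 by simp
  moreover have "card Om \<noteq> 0" using Om_fin Om_ne by auto
  ultimately show ?thesis by simp
qed

end


context EA begin

definition "ssum U C = {u + c | u c. u \<in> U \<and> c \<in> C}"

lemma ssumI: "u \<in> U \<Longrightarrow> c \<in> C \<Longrightarrow> u + c \<in> ssum U C"
  unfolding ssum_def by blast
lemma ssumE: "x \<in> ssum U C \<Longrightarrow> (\<And>u c. u \<in> U \<Longrightarrow> c \<in> C \<Longrightarrow> x = u + c \<Longrightarrow> P) \<Longrightarrow> P"
  unfolding ssum_def by blast

lemma ssum_sub: assumes "V.subspace U" "V.subspace C" shows "V.subspace (ssum U C)"
  unfolding ssum_def using V.subspace_sums[OF assms] .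

lemma ssum_left: "V.subspace C \<Longrightarrow> u \<in> U \<Longrightarrow> u \<in> ssum U C"
  using ssumI[of u U 0 C] V.subspace_0 by simp
lemma ssum_right: "V.subspace U \<Longrightarrow> c \<in> C \<Longrightarrow> c \<in> ssum U C"
  using ssumI[of 0 U c C] V.subspace_0 by simp

lemma compl_span:
  assumes U: "V.subspace U" and F: "finite F"
  shows "\<exists>C. V.subspace C \<and> C \<subseteq> V.span F \<and> (\<forall>x. x \<in> U \<and> x \<in> C \<longrightarrow> x = 0) \<and>
         V.span F \<subseteq> ssum U C"
  using F
proof (induction F rule: finite_induct)
  case empty
  have s0: "V.subspace {0}" by simp
  have "V.span {} \<subseteq> ssum U {0}" using ssum_left[OF s0 V.subspace_0[OF U]] by simp
  moreover have "{0} \<subseteq> V.span {}" by simp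
  moreover have "\<forall>x. x \<in> U \<and> x \<in> {0} \<longrightarrow> x = 0" by simp
  ultimately show ?case using s0 by blast
next
  case (insert f F)
  then obtain C where C: "V.subspace C" "C \<subseteq> V.span F" "\<forall>x. x \<in> U \<and> x \<in> C \<longrightarrow> x = 0"
    "V.span F \<subseteq> ssum U C" by blast
  have spF: "V.span F \<subseteq> V.span (insert f F)" by (rule V.span_mono) blast
  show ?case
  proof (cases "f \<in> ssum U C")
    case True
    have "insert f F \<subseteq> ssum U C" using True C(4) V.span_superset[of F] by blast
    then have "V.span (insert f F) \<subseteq> ssum U C"
      by (rule V.span_minimal) (rule ssum_sub[OF U C(1)])
    moreover have "C \<subseteq> V.span (insert f F)" using C(2) spF by (rule subset_trans)
    ultimately show ?thesis using C(1,3) by blast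
  next
    case False
    note fnot = False
    define C' where "C' = V.span (insert f C)"
    have sC': "V.subspace C'" unfolding C'_def by simp
    have "insert f C \<subseteq> V.span (insert f F)"
      using C(2) spF V.span_superset[of "insert f F"] by blast
    then have C'sub: "C' \<subseteq> V.span (insert f F)" unfolding C'_def by (rule V.span_minimal) simp
    have CC': "C \<subseteq> C'" unfolding C'_def using V.span_superset[of "insert f C"] by blast
    have fC': "f \<in> C'" unfolding C'_def by (simp add: V.span_base)
    have disj: "\<forall>x. x \<in> U \<and> x \<in> C' \<longrightarrow> x = 0"
    proof (intro allI impI)
      fix x assume x: "x \<in> U \<and> x \<in> C'"
      then obtain k where k: "x - smul k f \<in> V.span C" unfolding C'_def V.span_breakdown_eq by blast
      have kc: "x - smul k f \<in> C" using k V.span_eq_iff[THEN iffD2, OF C(1)] by simp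
      show "x = 0"
      proof (cases "k = 0")
        case True then show ?thesis using kc x C(3) by simp
      next
        case False
        have fe: "f = smul (1/k) x + smul (1/k) (- (x - smul k f))" using False
          by (simp add: V.scale_right_diff_distrib V.scale_right_distrib)
        have 1: "smul (1/k) x \<in> U" using x V.subspace_scale[OF U] by blast
        have 2: "smul (1/k) (- (x - smul k f)) \<in> C" using kc V.subspace_scale[OF C(1)] V.subspace_neg[OF C(1)] by blast
        have "f \<in> ssum U C" using ssumI[OF 1 2] fe by simp
        then show ?thesis using fnot by blast
      qed
    qed
    have "insert f F \<subseteq> ssum U C'"
    proof
      fix y assume "y \<in> insert f F"
      then show "y \<in> ssum U C'"
      proof
        assume "y = f" then show ?thesis using ssum_right[OF U fC'] by simp
      next
        assume "y \<in> F"
        then have "y \<in> ssum U C" using C(4) V.span_superset by blast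
        then show ?thesis by (rule ssumE) (use CC' ssumI in blast)
      qed
    qed
    then have "V.span (insert f F) \<subseteq> ssum U C'" by (rule V.span_minimal) (rule ssum_sub[OF U sC'])
    then show ?thesis using sC' C'sub disj by blast
  qed
qed

lemma fin_span_basis: assumes W: "V.subspace W" and F0: "finite F0" "W \<subseteq> V.span F0"
  obtains F where "finite F" "F \<subseteq> W" "V.span F = W"
proof -
  obtain Bs where Bs: "Bs \<subseteq> W" "V.independent Bs" "W \<subseteq> V.span Bs" "card Bs = V.dim W"
    by (rule V.basis_exists)
  have "Bs \<subseteq> V.span F0" using Bs(1) F0(2) by (rule subset_trans)
  then have "finite Bs" using V.independent_span_bound[OF F0(1) Bs(2)] by simp
  moreover have "V.span Bs = W" using V.span_subspace[OF Bs(1) Bs(3) W] .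
  ultimately show ?thesis using that[of Bs] Bs(1) by simp
qed

lemma complement:
  assumes U: "V.subspace U" and W: "V.subspace W" and UW: "U \<subseteq> W" and F0: "finite F0" "W \<subseteq> V.span F0"
  shows "\<exists>C. V.subspace C \<and> C \<subseteq> W \<and> (\<forall>x. x \<in> U \<and> x \<in> C \<longrightarrow> x = 0) \<and>
         (\<forall>w\<in>W. \<exists>u\<in>U. \<exists>c\<in>C. w = u + c)"
proof -
  obtain F where F: "finite F" "F \<subseteq> W" "V.span F = W" using fin_span_basis[OF W F0] by blast
  obtain C where C: "V.subspace C" "C \<subseteq> V.span F" "\<forall>x. x \<in> U \<and> x \<in> C \<longrightarrow> x = 0"
         "V.span F \<subseteq> ssum U C" using compl_span[OF U F(1)] by blast
  have "\<forall>w\<in>W. \<exists>u\<in>U. \<exists>c\<in>C. w = u + c"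
  proof
    fix w assume "w \<in> W"
    then have "w \<in> V.span F" using F(3) by simp
    then have "w \<in> ssum U C" using C(4) by blast
    then show "\<exists>u\<in>U. \<exists>c\<in>C. w = u + c" by (rule ssumE) blast
  qed
  moreover have "C \<subseteq> W" using C(2) F(3) by simp
  ultimately show ?thesis using C(1,3) by (intro exI[of _ C] conjI)
qed

end


context EA begin

definition "ndg S \<longleftrightarrow> (\<forall>x\<in>S. (\<forall>y\<in>S. B x y = 0) \<longrightarrow> x = 0)"

lemma riesz: assumes "finite F" "ndg (V.span F)" shows "\<exists>t\<in>V.span F. \<forall>y\<in>V.span F. B h y = B t y"
  using assms
proof (induction "card F" arbitrary: F rule: less_induct)
  case less
  note IH = less.hyps and finF = less.prems(1) and nd = less.prems(2)
  show ?case
  proof (cases "\<exists>u\<in>V.span F. B u u \<noteq> 0")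
    case False
    have zero: "x = 0" if x: "x \<in> V.span F" for x
    proof -
      have "B x y = 0" if y: "y \<in> V.span F" for y
      proof -
        have "B (x + y) (x + y) = 0" using False V.span_add[OF x y] by blast
        moreover have "B x x = 0" "B y y = 0" using False x y by blast+
        moreover have "B (x + y) (x + y) = B x x + 2 * B x y + B y y"
          by (simp add: B_add1 B_add2 B_sym[of y x])
        ultimately show ?thesis by simp
      qed
      then show ?thesis using nd x unfolding ndg_def by blast
    qed
    show ?thesis
    proof (intro bexI[of _ 0] ballI)
      fix y assume "y \<in> V.span F"
      then have "y = 0" by (rule zero)
      then show "B h y = B 0 y" by simp
    qed (rule V.span_zero)
  next
    case True
    then obtain u where u: "u \<in> V.span F" "B u u \<noteq> 0" by blast
    define a where "a = B u u"
    have a0: "a \<noteq> 0" using u unfolding a_def by simp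
    define p where "p x = x - smul (B x u / a) u" for x
    have pu: "B (p x) u = 0" for x unfolding p_def a_def using u(2) by (simp add: B_diff1 B_smul1)
    have p_add: "p (x + y) = p x + p y" for x y unfolding p_def
      by (simp add: B_add1 add_divide_distrib V.scale_left_distrib algebra_simps)
    have p_smul: "p (smul c x) = smul c (p x)" for c x unfolding p_def
      by (simp add: B_smul1 V.scale_right_diff_distrib)
    have p0: "p 0 = 0" unfolding p_def by simp
    have pdec: "y = p y + smul (B y u / a) u" for y unfolding p_def by simp
    have pF: "p x \<in> V.span F" if "x \<in> V.span F" for x
      unfolding p_def using that u(1) by (simp add: V.span_diff V.span_scale)
    define G where "G = p ` F"
    have finG: "finite G" unfolding G_def using finF by simp
    have cardG: "card G \<le> card F" unfolding G_def using finF by (rule card_image_le)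
    have GF: "G \<subseteq> V.span F" unfolding G_def using pF V.span_superset by blast
    have spGF: "V.span G \<subseteq> V.span F" using GF by (rule V.span_minimal) simp
    have orth_sub: "V.subspace {x. B x u = 0}"
      unfolding V.subspace_def by (simp add: B_add1 B_smul1)
    have spG_orth: "V.span G \<subseteq> {x. B x u = 0}"
      by (rule V.span_minimal) (auto simp: G_def pu intro: orth_sub)
    have p_sub: "V.subspace {y. p y \<in> V.span G}"
      unfolding V.subspace_def by (simp add: p0 p_add p_smul V.span_zero V.span_add V.span_scale)
    have pspan: "p y \<in> V.span G" if "y \<in> V.span F" for y
    proof -
      have "F \<subseteq> {y. p y \<in> V.span G}" unfolding G_def using V.span_superset by blast
      then have "V.span F \<subseteq> {y. p y \<in> V.span G}" by (rule V.span_minimal) (rule p_sub)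
      then show ?thesis using that by blast
    qed
    obtain G' where G': "finite G'" "card G' < card F" "V.span G' = V.span G"
    proof (cases "card G < card F")
      case True then show ?thesis using that[of G] finG by simp
    next
      case False
      then have cGF: "card G = card F" using cardG by simp
      have "V.dependent G"
      proof (rule ccontr)
        assume ind: "\<not> V.dependent G"
        have "u \<notin> V.span G" using spG_orth u(2) by blast
        then have ind2: "V.independent (insert u G)" using V.independent_insertI ind by blast
        have "insert u G \<subseteq> V.span F" using GF u(1) by blast
        then have "card (insert u G) \<le> card F" using V.independent_span_bound[OF finF ind2] by simp
        moreover have "u \<notin> G" using \<open>u \<notin> V.span G\<close> V.span_superset by blast
        ultimately show False using finG cGF by simp
      qed
      then obtain g where g: "g \<in> G" "g \<in> V.span (G - {g})" unfolding V.dependent_def by blast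
      have "V.span (G - {g}) = V.span (insert g (G - {g}))" using V.span_redundant[OF g(2)] by simp
      also have "insert g (G - {g}) = G" using g(1) by blast
      finally have e: "V.span (G - {g}) = V.span G" .
      have "card (G - {g}) < card F" using cGF g(1) finG
        by (metis card_Diff1_less)
      then show ?thesis using that[of "G - {g}"] finG e by simp
    qed
    have ndG': "ndg (V.span G')" unfolding ndg_def
    proof (intro ballI impI)
      fix x assume x: "x \<in> V.span G'" and o: "\<forall>y\<in>V.span G'. B x y = 0"
      have xF: "x \<in> V.span F" using x G'(3) spGF by blast
      have xu: "B x u = 0" using x G'(3) spG_orth by blast
      have "\<forall>y\<in>V.span F. B x y = 0"
      proof
        fix y assume y: "y \<in> V.span F"
        have "B x y = B x (p y) + (B y u / a) * B x u"
          by (subst pdec[of y]) (simp add: B_add2 B_smul2)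
        moreover have "B x (p y) = 0" using o pspan[OF y] G'(3) by blast
        ultimately show "B x y = 0" using xu by simp
      qed
      then show "x = 0" using nd xF unfolding ndg_def by blast
    qed
    obtain t1 where t1: "t1 \<in> V.span G'" "\<forall>y\<in>V.span G'. B h y = B t1 y"
      using IH[OF G'(2) G'(1) ndG'] by blast
    have t1u: "B t1 u = 0" using t1(1) G'(3) spG_orth by blast
    define t where "t = t1 + smul (B h u / a) u"
    have tF: "t \<in> V.span F" unfolding t_def using t1(1) G'(3) spGF u(1)
      by (blast intro: V.span_add V.span_scale)
    have "B h y = B t y" if y: "y \<in> V.span F" for y
    proof -
      have py: "p y \<in> V.span G'" using pspan[OF y] G'(3) by simp
      have "B t y = B t1 y + (B h u / a) * B u y" unfolding t_def by (simp add: B_add1 B_smul1)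
      also have "B t1 y = B t1 (p y) + (B y u / a) * B t1 u"
        by (subst pdec[of y]) (simp add: B_add2 B_smul2)
      also have "B t1 (p y) = B h (p y)" using t1(2) py by simp
      also have "B h (p y) = B h y - (B y u / a) * B h u" unfolding p_def by (simp add: B_diff2 B_smul2)
      finally show ?thesis using t1u a0 by (simp add: B_sym[of u y] field_simps)
    qed
    then show ?thesis using tF by blast
  qed
qed

end


context EAR begin

definition "U = (\<Union>\<alpha>\<in>R' - {z0}. E \<alpha>)"
definition "Lc K = V.span (K \<union> U)"
definition "T = V.span X"
definition "ZK K = {h \<in> K. \<forall>\<beta>\<in>R'. \<beta> h = 0}"

lemma Lc_eq: "lie_cover smul br H R' K = Lc K"
  unfolding lie_cover_def Lc_def U_def by simp
lemma T_eq: "hsub smul B H R' = T"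
  unfolding hsub_def T_def X_def by simp

lemma U_E: "y \<in> U \<longleftrightarrow> (\<exists>\<alpha>\<in>R' - {z0}. y \<in> E \<alpha>)"
  unfolding U_def by blast

lemma Rm_facts: assumes "\<alpha> \<in> R' - {z0}"
  shows "\<alpha> \<in> Aset" "\<alpha> \<in> aniso B H R'" "(\<lambda>h. - \<alpha> h) \<in> R' - {z0}"
proof -
  show a: "\<alpha> \<in> Aset" using assms unfolding Aset_def .
  show "\<alpha> \<in> aniso B H R'" using assms aniso_R' by simp
  have "(\<lambda>h. - \<alpha> h) \<in> R'" using negR' assms by blast
  moreover have "(\<lambda>h. - \<alpha> h) \<noteq> z0"
  proof
    assume e: "(\<lambda>h. - \<alpha> h) = z0"
    have "\<alpha> h = 0" for h using fun_cong[OF e, of h] by simp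
    then have "\<alpha> = z0" by (rule ext)
    then show False using assms by simp
  qed
  ultimately show "(\<lambda>h. - \<alpha> h) \<in> R' - {z0}" by simp
qed

lemma neg_neg_fun[simp]: "(\<lambda>h. - (- (\<alpha>::'a \<Rightarrow> complex) h)) = \<alpha>" by simp

lemma cov_sub: "is_cover smul B H R' K \<Longrightarrow> V.subspace K" unfolding is_cover_def by (rule conjunct1)
lemma cov_H: "is_cover smul B H R' K \<Longrightarrow> K \<subseteq> H" unfolding is_cover_def by (elim conjE)
lemma cov_t: "is_cover smul B H R' K \<Longrightarrow> \<alpha> \<in> aniso B H R' \<Longrightarrow> tv \<alpha> \<in> K"
  unfolding is_cover_def by (elim conjE) (erule bspec)
lemma cov_nd: "is_cover smul B H R' K \<Longrightarrow> x \<in> K \<Longrightarrow> (\<And>y. y \<in> K \<Longrightarrow> B x y = 0) \<Longrightarrow> x = 0"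
  unfolding is_cover_def by (elim conjE) blast

lemma tvK: assumes c: "is_cover smul B H R' K" and a: "\<alpha> \<in> R'" shows "tv \<alpha> \<in> K"
proof (cases "\<alpha> = z0")
  case True
  have "V.subspace K" using c unfolding is_cover_def by (rule conjunct1)
  then show ?thesis using True tvec_z0 V.subspace_0 by simp
next
  case False
  then have "\<alpha> \<in> aniso B H R'" using a aniso_R' by simp
  then show ?thesis using c cov_t by blast
qed

lemma X_K: "is_cover smul B H R' K \<Longrightarrow> X \<subseteq> K" unfolding X_def using tvK by blast
lemma T_K: "is_cover smul B H R' K \<Longrightarrow> T \<subseteq> K"
  unfolding T_def by (rule V.span_minimal) (simp_all add: X_K cov_sub)

lemma T_H: "T \<subseteq> H" unfolding T_def by (rule V.span_minimal) (simp_all add: X_H H_subspace)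

lemma T_cov: "is_cover smul B H R' T"
  unfolding is_cover_def
proof (intro conjI ballI impI)
  show "V.subspace T" unfolding T_def by simp
  show "T \<subseteq> H" by (rule T_H)
  fix \<alpha> assume "\<alpha> \<in> aniso B H R'"
  then have "tv \<alpha> \<in> X" unfolding X_def aniso_def by simp
  then show "tv \<alpha> \<in> T" unfolding T_def by (rule V.span_base)
next
  fix x assume "x \<in> T" "\<forall>y\<in>T. B x y = 0"
  then show "x = 0" using T_nd unfolding T_def by blast
qed

lemma K_L: "K \<subseteq> Lc K" unfolding Lc_def using V.span_superset by blast
lemma U_L: "U \<subseteq> Lc K" unfolding Lc_def using V.span_superset by blast
lemma E_L: "\<alpha> \<in> R' - {z0} \<Longrightarrow> E \<alpha> \<subseteq> Lc K" using U_L unfolding U_def by blast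

definition "cmpn K c \<longleftrightarrow> c z0 \<in> K \<and> (\<forall>\<alpha>\<in>R' - {z0}. c \<alpha> \<in> E \<alpha>)"

lemma cmpn_E: "K \<subseteq> H \<Longrightarrow> cmpn K c \<Longrightarrow> \<alpha> \<in> R' \<Longrightarrow> c \<alpha> \<in> E \<alpha>"
  unfolding cmpn_def using H0 by (cases "\<alpha> = z0") auto

lemma decomp_L: assumes K: "V.subspace K" and x: "x \<in> Lc K"
  shows "\<exists>c. cmpn K c \<and> x = sum c R'"
proof -
  define D where "D = {x. \<exists>c. cmpn K c \<and> x = sum c R'}"
  have sD: "V.subspace D" unfolding V.subspace_def
  proof (intro conjI ballI allI)
    have "cmpn K (\<lambda>_. 0)" unfolding cmpn_def using V.subspace_0[OF K] V.subspace_0[OF E_subspace] by blast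
    then show "0 \<in> D" unfolding D_def by force
  next
    fix x y assume "x \<in> D" "y \<in> D"
    then obtain c d where c: "cmpn K c" "x = sum c R'" and d: "cmpn K d" "y = sum d R'"
      unfolding D_def by blast
    have "cmpn K (\<lambda>\<alpha>. c \<alpha> + d \<alpha>)" using c(1) d(1) V.subspace_add[OF K] V.subspace_add[OF E_subspace]
      unfolding cmpn_def by blast
    moreover have "x + y = (\<Sum>\<alpha>\<in>R'. c \<alpha> + d \<alpha>)" using c(2) d(2) by (simp add: sum.distrib)
    ultimately show "x + y \<in> D" unfolding D_def by blast
  next
    fix a x assume "x \<in> D"
    then obtain c where c: "cmpn K c" "x = sum c R'" unfolding D_def by blast
    have "cmpn K (\<lambda>\<alpha>. smul a (c \<alpha>))" using c(1) V.subspace_scale[OF K] V.subspace_scale[OF E_subspace]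
      unfolding cmpn_def by blast
    moreover have "smul a x = (\<Sum>\<alpha>\<in>R'. smul a (c \<alpha>))" using c(2) by (simp add: V.scale_sum_right)
    ultimately show "smul a x \<in> D" unfolding D_def by blast
  qed
  have gens: "K \<union> U \<subseteq> D"
  proof
    fix y assume "y \<in> K \<union> U"
    then show "y \<in> D"
    proof
      assume y: "y \<in> K"
      define c where "c \<alpha> = (if \<alpha> = z0 then y else 0)" for \<alpha>
      have "cmpn K c" unfolding cmpn_def c_def using y V.subspace_0[OF E_subspace] by simp
      moreover have "y = sum c R'" unfolding c_def using z0R' fin by (simp add: sum.delta)
      ultimately show ?thesis unfolding D_def by blast
    next
      assume "y \<in> U"
      then obtain \<beta> where b: "\<beta> \<in> R' - {z0}" "y \<in> E \<beta>" unfolding U_def by blast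
      define c where "c \<alpha> = (if \<alpha> = \<beta> then y else 0)" for \<alpha>
      have "cmpn K c" unfolding cmpn_def c_def using b V.subspace_0[OF E_subspace] V.subspace_0[OF K] by auto
      moreover have "y = sum c R'" unfolding c_def using b fin by (simp add: sum.delta)
      ultimately show ?thesis unfolding D_def by blast
    qed
  qed
  have "Lc K \<subseteq> D" unfolding Lc_def using gens sD by (rule V.span_minimal)
  then show ?thesis using x unfolding D_def by blast
qed

lemma R'_lf: "\<alpha> \<in> R' \<Longrightarrow> lin_functional smul H \<alpha>" using R'R R_lf by blast

lemma indep_R': assumes "\<And>\<alpha>. \<alpha> \<in> R' \<Longrightarrow> c \<alpha> \<in> E \<alpha>" "sum c R' = 0" "\<alpha> \<in> R'" shows "c \<alpha> = 0"
  using indep[OF fin, of c, OF _ assms(2,3)] assms(1) R'_lf by blast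

end


context EAR begin

lemma HE: "h \<in> H \<Longrightarrow> b \<in> E \<beta> \<Longrightarrow> br h b = smul (\<beta> h) b"
  by (simp add: E_mem)

lemma EE: assumes a: "\<alpha> \<in> R' - {z0}" and b: "\<beta> \<in> R' - {z0}" and xa: "x \<in> E \<alpha>" and yb: "y \<in> E \<beta>"
  shows "br x y \<in> V.span (X \<union> U)"
proof (cases "(\<lambda>h. \<alpha> h + \<beta> h) = z0")
  case True
  have "\<beta> h = - \<alpha> h" for h using fun_cong[OF True, of h] by (simp add: eq_neg_iff_add_eq_0 add.commute)
  then have "\<beta> = (\<lambda>h. - \<alpha> h)" by (rule ext)
  then have yn: "y \<in> E (\<lambda>h. - \<alpha> h)" using yb by simp
  have aR: "\<alpha> \<in> R" using a R'R by blast
  have "br x y = smul (B x y) (tv \<alpha>)" by (rule br_pair_t[OF aR xa yn])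
  moreover have "tv \<alpha> \<in> X" unfolding X_def using a by blast
  ultimately show ?thesis by (simp add: V.span_scale V.span_base)
next
  case False
  have bE: "br x y \<in> E (\<lambda>h. \<alpha> h + \<beta> h)" by (rule br_E[OF xa yb])
  show ?thesis
  proof (cases "br x y = 0")
    case True then show ?thesis by (simp add: V.span_zero)
  next
    case nz: False
    have lf: "lin_functional smul H (\<lambda>h. \<alpha> h + \<beta> h)" using R'_lf a b lf_plus by blast
    have "(\<lambda>h. \<alpha> h + \<beta> h) \<in> R" by (rule R_I[OF lf bE nz])
    then have "(\<lambda>h. \<alpha> h + \<beta> h) \<in> R'" using cl a b unfolding closed_sub_def by blast
    then have "br x y \<in> U" unfolding U_def using False bE by blast
    then show ?thesis by (simp add: V.span_base)
  qed
qed

lemma sub_pre1: "V.subspace M \<Longrightarrow> V.subspace {x. br x b \<in> M}"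
  unfolding V.subspace_def by (simp add: br_add1 br_smul1)
lemma sub_pre2: "V.subspace M \<Longrightarrow> V.subspace {y. br x y \<in> M}"
  unfolding V.subspace_def by (simp add: br_add2 br_smul2)

lemma br_span: assumes M: "V.subspace M" and g: "\<And>a b. a \<in> G1 \<Longrightarrow> b \<in> G2 \<Longrightarrow> br a b \<in> M"
  and x: "x \<in> V.span G1" and y: "y \<in> V.span G2" shows "br x y \<in> M"
proof -
  have 1: "br x' b \<in> M" if b: "b \<in> G2" and x': "x' \<in> V.span G1" for b x'
  proof -
    have "G1 \<subseteq> {x. br x b \<in> M}" using g b by blast
    then have "V.span G1 \<subseteq> {x. br x b \<in> M}" by (rule V.span_minimal) (rule sub_pre1[OF M])
    then show ?thesis using x' by blast
  qed
  have "G2 \<subseteq> {y. br x y \<in> M}" using 1 x by blast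
  then have "V.span G2 \<subseteq> {y. br x y \<in> M}" by (rule V.span_minimal) (rule sub_pre2[OF M])
  then show ?thesis using y by blast
qed

lemma XU_L: assumes c: "is_cover smul B H R' K" shows "V.span (X \<union> U) \<subseteq> Lc K"
  unfolding Lc_def using X_K[OF c] by (intro V.span_mono) blast

lemma Lc_sub: assumes c: "is_cover smul B H R' K" shows "lie_subalgebra smul br (Lc K)"
  unfolding lie_subalgebra_def
proof (intro conjI ballI)
  show "V.subspace (Lc K)" unfolding Lc_def by simp
  have KH: "K \<subseteq> H" using cov_H[OF c] .
  have sL: "V.subspace (Lc K)" unfolding Lc_def by simp
  fix x y assume x: "x \<in> Lc K" and y: "y \<in> Lc K"
  show "br x y \<in> Lc K"
  proof (rule br_span[OF sL _ x[unfolded Lc_def] y[unfolded Lc_def]])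
    fix a b assume a: "a \<in> K \<union> U" and b: "b \<in> K \<union> U"
    show "br a b \<in> Lc K"
    proof (cases "a \<in> K")
      case aK: True
      show ?thesis
      proof (cases "b \<in> K")
        case True
        then have "br a b = 0" using aK KH H_ab by blast
        then show ?thesis using V.subspace_0[OF sL] by simp
      next
        case False
        then obtain \<beta> where bb: "\<beta> \<in> R' - {z0}" "b \<in> E \<beta>" using b unfolding U_def by blast
        have "br a b = smul (\<beta> a) b" using HE aK KH bb by blast
        then show ?thesis using E_L[OF bb(1)] bb(2) V.subspace_scale[OF sL] by auto
      qed
    next
      case aU: False
      then obtain \<alpha> where aa: "\<alpha> \<in> R' - {z0}" "a \<in> E \<alpha>" using a unfolding U_def by blast
      show ?thesis
      proof (cases "b \<in> K")
        case True
        have "br a b = - smul (\<alpha> b) a" using br_anti[of a b] HE[of b a \<alpha>] True KH aa by auto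
        have "a \<in> Lc K" using E_L[OF aa(1)] aa(2) by blast
        then have "smul (\<alpha> b) a \<in> Lc K" using V.subspace_scale[OF sL] by blast
        then have "- smul (\<alpha> b) a \<in> Lc K" using V.subspace_neg[OF sL] by blast
        then show ?thesis using \<open>br a b = _\<close> by simp
      next
        case False
        then obtain \<beta> where bb: "\<beta> \<in> R' - {z0}" "b \<in> E \<beta>" using b unfolding U_def by blast
        show ?thesis using EE[OF aa(1) bb(1) aa(2) bb(2)] XU_L[OF c] by blast
      qed
    qed
  qed
qed

lemma E_fin: assumes b: "\<beta> \<in> R' - {z0}" shows "\<exists>f. E \<beta> \<subseteq> V.span {f}"
proof -
  have nb: "(\<lambda>h. - \<beta> h) \<in> R' - {z0}" using Rm_facts(3)[OF b] .
  have nbR: "(\<lambda>h. - \<beta> h) \<in> R" using nb R'R by blast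
  have "\<beta> \<in> R" using b R'R by blast
  then have bR: "(\<lambda>h. - (- \<beta> h)) \<in> R" by simp
  have hb: "has_t \<beta>" using b htR' by blast
  have an: "rform B H (\<lambda>h. - \<beta> h) (\<lambda>h. - \<beta> h) \<noteq> 0"
    using rform_neg[OF hb] Rm_facts(2)[OF b] unfolding aniso_def by simp
  obtain f where "E (\<lambda>h. - (- \<beta> h)) \<subseteq> V.span {f}" using E_line[OF nbR bR an] by blast
  then show ?thesis by auto
qed

lemma fin_Lc: assumes c: "is_cover smul B H R' K" shows "fin_dim smul (Lc K)"
proof -
  obtain F0 where F0: "finite F0" "H \<subseteq> V.span F0" using H_fin unfolding fin_dim_def by blast
  define fb where "fb \<beta> = (SOME f. E \<beta> \<subseteq> V.span {f})" for \<beta>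
  have fb: "E \<beta> \<subseteq> V.span {fb \<beta>}" if "\<beta> \<in> R' - {z0}" for \<beta>
    unfolding fb_def using E_fin[OF that] by (rule someI_ex)
  define F where "F = F0 \<union> fb ` (R' - {z0})"
  have finF: "finite F" unfolding F_def using F0(1) fin by simp
  have "K \<union> U \<subseteq> V.span F"
  proof
    fix y assume "y \<in> K \<union> U"
    then show "y \<in> V.span F"
    proof
      assume "y \<in> K"
      then have "y \<in> V.span F0" using cov_H[OF c] F0(2) by blast
      then show ?thesis unfolding F_def using V.span_mono[of F0 "F0 \<union> fb ` (R' - {z0})"] by blast
    next
      assume "y \<in> U"
      then obtain \<beta> where bb: "\<beta> \<in> R' - {z0}" "y \<in> E \<beta>" unfolding U_def by blast
      then have "y \<in> V.span {fb \<beta>}" using fb by blast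
      moreover have "{fb \<beta>} \<subseteq> F" unfolding F_def using bb(1) by blast
      ultimately show ?thesis using V.span_mono by blast
    qed
  qed
  then have "Lc K \<subseteq> V.span F" unfolding Lc_def by (rule V.span_minimal) simp
  then show ?thesis unfolding fin_dim_def using finF by blast
qed

lemma dist_K: assumes c: "is_cover smul B H R' K" and a: "\<alpha> \<in> R'" and b: "\<beta> \<in> R'" and ne: "\<alpha> \<noteq> \<beta>"
  shows "\<exists>k\<in>K. \<alpha> k \<noteq> \<beta> k"
proof (rule ccontr)
  assume "\<not> (\<exists>k\<in>K. \<alpha> k \<noteq> \<beta> k)"
  then have eq: "\<alpha> k = \<beta> k" if "k \<in> K" for k using that by blast
  have ha: "has_t \<alpha>" and hb: "has_t \<beta>" using a b htR' by blast+
  have dK: "tv \<alpha> - tv \<beta> \<in> K" using tvK[OF c a] tvK[OF c b] V.subspace_diff[OF cov_sub[OF c]] by blast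
  have "tv \<alpha> - tv \<beta> = 0"
  proof (rule cov_nd[OF c dK])
    fix y assume y: "y \<in> K"
    then have yH: "y \<in> H" using cov_H[OF c] by blast
    have "B (tv \<alpha> - tv \<beta>) y = B y (tv \<alpha>) - B y (tv \<beta>)" by (simp add: B_diff2 B_sym[of _ y])
    also have "\<dots> = \<alpha> y - \<beta> y" using tvec_prop[OF ha yH] tvec_prop[OF hb yH] by simp
    finally show "B (tv \<alpha> - tv \<beta>) y = 0" using eq[OF y] by simp
  qed
  then have "tv \<alpha> = tv \<beta>" by simp
  then have "\<alpha> h = \<beta> h" if "h \<in> H" for h using tvec_prop[OF ha that] tvec_prop[OF hb that] by simp
  then have "\<alpha> = \<beta>" using lf_eqI[OF R'_lf[OF a] R'_lf[OF b]] by blast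
  then show False using ne by simp
qed

lemma proj: assumes KH: "K \<subseteq> H" and I: "V.subspace I" and Icl: "\<And>k y. k \<in> K \<Longrightarrow> y \<in> I \<Longrightarrow> br k y \<in> I"
  and A: "finite A" and dist: "\<And>\<alpha> \<beta>. \<alpha> \<in> A \<Longrightarrow> \<beta> \<in> A \<Longrightarrow> \<alpha> \<noteq> \<beta> \<Longrightarrow> \<exists>k\<in>K. \<alpha> k \<noteq> \<beta> k"
  and cE: "\<And>\<alpha>. \<alpha> \<in> A \<Longrightarrow> c \<alpha> \<in> E \<alpha>" and s: "sum c A \<in> I" and a: "\<alpha> \<in> A"
  shows "c \<alpha> \<in> I"
  using A dist cE s a
proof (induction "card A" arbitrary: A c rule: less_induct)
  case less
  note IH = less.hyps and A = less.prems(1) and dist = less.prems(2) and cE = less.prems(3)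
    and s = less.prems(4) and a = less.prems(5)
  show ?case
  proof (cases "A = {\<alpha>}")
    case True then show ?thesis using s by simp
  next
    case False
    then obtain \<beta> where b: "\<beta> \<in> A" "\<beta> \<noteq> \<alpha>" using a by blast
    obtain k where k: "k \<in> K" "\<alpha> k \<noteq> \<beta> k" using dist[OF a b(1)] b(2) by metis
    have kH: "k \<in> H" using k KH by blast
    define c' where "c' \<gamma> = smul (\<gamma> k - \<beta> k) (c \<gamma>)" for \<gamma>
    have c'E: "c' \<gamma> \<in> E \<gamma>" if "\<gamma> \<in> A - {\<beta>}" for \<gamma>
      unfolding c'_def using cE that V.subspace_scale[OF E_subspace] by blast
    have "sum c' (A - {\<beta>}) = sum c' A"
      using sum.remove[OF A b(1), of c'] unfolding c'_def by simp
    also have "\<dots> = (\<Sum>\<gamma>\<in>A. br k (c \<gamma>) - smul (\<beta> k) (c \<gamma>))"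
      unfolding c'_def
    proof (rule sum.cong)
      fix \<gamma> assume "\<gamma> \<in> A"
      then show "smul (\<gamma> k - \<beta> k) (c \<gamma>) = br k (c \<gamma>) - smul (\<beta> k) (c \<gamma>)"
        using HE[OF kH cE] by (simp add: V.scale_left_diff_distrib)
    qed simp
    also have "\<dots> = br k (sum c A) - smul (\<beta> k) (sum c A)"
      by (simp add: sum_subtractf br_sum2 V.scale_sum_right)
    finally have "sum c' (A - {\<beta>}) \<in> I"
      using Icl[OF k(1) s] s V.subspace_diff[OF I] V.subspace_scale[OF I] by metis
    moreover have "card (A - {\<beta>}) < card A" using card_Diff1_less[OF A b(1)] .
    moreover have "\<alpha> \<in> A - {\<beta>}" using a b by simp
    ultimately have "c' \<alpha> \<in> I" using IH[of "A - {\<beta>}" c'] A dist c'E by simp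
    then have "smul (1 / (\<alpha> k - \<beta> k)) (c' \<alpha>) \<in> I" using V.subspace_scale[OF I] by blast
    then show ?thesis unfolding c'_def using k(2) by simp
  qed
qed

end


context EAR begin

lemma idl: assumes "lie_ideal smul br L I"
  shows "V.subspace I" "I \<subseteq> L" "\<And>x y. x \<in> L \<Longrightarrow> y \<in> I \<Longrightarrow> br x y \<in> I"
  using assms unfolding lie_ideal_def by blast+

lemma idl_r: assumes "lie_ideal smul br L I" "x \<in> L" "y \<in> I" shows "br y x \<in> I"
proof -
  have "br x y \<in> I" using idl(3)[OF assms] .
  then have "- br x y \<in> I" using V.subspace_neg[OF idl(1)[OF assms(1)]] by blast
  then show ?thesis using br_anti[of y x] by simp
qed

lemma caseA_t: assumes c: "is_cover smul B H R' K" and I: "lie_ideal smul br (Lc K) I"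
  and b: "\<beta> \<in> R' - {z0}" and y: "y \<in> I" "y \<in> E \<beta>" "y \<noteq> 0"
  shows "tv \<beta> \<in> I"
proof -
  obtain f where f: "f \<in> E (\<lambda>h. - \<beta> h)" "B y f \<noteq> 0" using pair[OF R'_lf y(2,3)] b by blast
  have fL: "f \<in> Lc K" using E_L[OF Rm_facts(3)[OF b]] f(1) by blast
  have "br y f \<in> I" by (rule idl_r[OF I fL y(1)])
  moreover have "br y f = smul (B y f) (tv \<beta>)" using br_pair_t[OF _ y(2) f(1)] b R'R by blast
  ultimately have "smul (B y f) (tv \<beta>) \<in> I" by simp
  then have "smul (1 / B y f) (smul (B y f) (tv \<beta>)) \<in> I" by (rule V.subspace_scale[OF idl(1)[OF I]])
  then show ?thesis using f(2) by simp
qed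

lemma caseA_E: assumes c: "is_cover smul B H R' K" and I: "lie_ideal smul br (Lc K) I"
  and b: "\<beta> \<in> R'" and t: "tv \<beta> \<in> I" and g: "\<gamma> \<in> R' - {z0}" and nz: "\<gamma> (tv \<beta>) \<noteq> 0"
  shows "E \<gamma> \<subseteq> I"
proof
  fix z assume z: "z \<in> E \<gamma>"
  have zL: "z \<in> Lc K" using E_L[OF g] z by blast
  have tH: "tv \<beta> \<in> H" using htR'[OF b] tvec_H by blast
  have "br z (tv \<beta>) \<in> I" by (rule idl(3)[OF I zL t])
  then have "- br z (tv \<beta>) \<in> I" using V.subspace_neg[OF idl(1)[OF I]] by blast
  then have "br (tv \<beta>) z \<in> I" using br_anti[of "tv \<beta>" z] by simp
  then have "smul (\<gamma> (tv \<beta>)) z \<in> I" using HE[OF tH z] by simp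
  then have "smul (1 / \<gamma> (tv \<beta>)) (smul (\<gamma> (tv \<beta>)) z) \<in> I" using V.subspace_scale[OF idl(1)[OF I]] by blast
  then show "z \<in> I" using nz by simp
qed

lemma caseA: assumes c: "is_cover smul B H R' K" and I: "lie_ideal smul br (Lc K) I"
  and ex: "\<exists>\<alpha>\<in>R' - {z0}. \<exists>y\<in>I. y \<in> E \<alpha> \<and> y \<noteq> 0"
  shows "X \<subseteq> I" "U \<subseteq> I"
proof -
  define A1 where "A1 = {\<beta> \<in> aniso B H R'. tv \<beta> \<in> I}"
  define A2 where "A2 = aniso B H R' - A1"
  obtain \<alpha> y where a: "\<alpha> \<in> R' - {z0}" "y \<in> I" "y \<in> E \<alpha>" "y \<noteq> 0" using ex by blast
  have "\<alpha> \<in> A1" unfolding A1_def using caseA_t[OF c I a] Rm_facts(2)[OF a(1)] by blast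
  then have A1ne: "A1 \<noteq> {}" by blast
  have A2e: "A2 = {}"
  proof (rule ccontr)
    assume ne: "A2 \<noteq> {}"
    have un: "A1 \<union> A2 = aniso B H R'" unfolding A1_def A2_def by blast
    have "\<not> (\<forall>a\<in>A1. \<forall>b\<in>A2. rform B H a b = 0)"
      using conn A1ne ne un unfolding connected_roots_def by blast
    then obtain a b where ab: "a \<in> A1" "b \<in> A2" "rform B H a b \<noteq> 0" by blast
    have aR: "a \<in> R'" "tv a \<in> I" using ab(1) unfolding A1_def aniso_def by simp_all
    have bA: "b \<in> aniso B H R'" "b \<notin> A1" using ab(2) unfolding A2_def by simp_all
    have bR: "b \<in> R' - {z0}" using bA(1) aniso_R' by simp
    have "b (tv a) = rform B H b a" using rform_eval[OF htR'[OF bR[THEN DiffD1]] htR'[OF aR(1)]] by simp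
    then have nz: "b (tv a) \<noteq> 0" using ab(3) rform_sym[of a b] by simp
    have EI: "E b \<subseteq> I" by (rule caseA_E[OF c I aR(1) aR(2) bR nz])
    obtain z where z: "z \<in> E b" "z \<noteq> 0" using R_nz bR R'R by blast
    have "tv b \<in> I" using caseA_t[OF c I bR _ z(1) z(2)] EI z(1) by blast
    then have "b \<in> A1" unfolding A1_def using bA(1) by simp
    then show False using bA(2) by simp
  qed
  have tI: "tv \<beta> \<in> I" if b: "\<beta> \<in> R' - {z0}" for \<beta>
  proof -
    have "\<beta> \<in> aniso B H R'" using Rm_facts(2)[OF b] .
    then have "\<beta> \<in> A1" using A2e unfolding A2_def by blast
    then show ?thesis unfolding A1_def by simp
  qed
  show "X \<subseteq> I"
  proof
    fix x assume "x \<in> X"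
    then obtain \<beta> where b: "\<beta> \<in> R'" "x = tv \<beta>" unfolding X_def by blast
    show "x \<in> I"
    proof (cases "\<beta> = z0")
      case True then show ?thesis using b tvec_z0 V.subspace_0[OF idl(1)[OF I]] by simp
    next
      case False then show ?thesis using tI b by simp
    qed
  qed
  show "U \<subseteq> I"
  proof
    fix x assume "x \<in> U"
    then obtain \<beta> where b: "\<beta> \<in> R' - {z0}" "x \<in> E \<beta>" unfolding U_def by blast
    have "\<beta> (tv \<beta>) \<noteq> 0" using A_facts(4,7)[OF Rm_facts(1)[OF b(1)]] by simp
    then have "E \<beta> \<subseteq> I" using caseA_E[OF c I _ tI[OF b(1)] b(1)] b by blast
    then show "x \<in> I" using b by blast
  qed
qed

lemma ZK_H: "is_cover smul B H R' K \<Longrightarrow> ZK K \<subseteq> H" unfolding ZK_def using cov_H by blast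

lemma ZK_sub: assumes c: "is_cover smul B H R' K" shows "V.subspace (ZK K)"
  unfolding V.subspace_def
proof (intro conjI ballI allI)
  have K: "V.subspace K" using cov_sub[OF c] .
  have "\<beta> 0 = 0" if "\<beta> \<in> R'" for \<beta> using lf_0[OF R'_lf[OF that]] .
  then show "0 \<in> ZK K" unfolding ZK_def using V.subspace_0[OF K] by blast
  fix x y assume x: "x \<in> ZK K" and y: "y \<in> ZK K"
  have xH: "x \<in> H" and yH: "y \<in> H" using x y ZK_H[OF c] by blast+
  have "\<beta> (x + y) = 0" if b: "\<beta> \<in> R'" for \<beta>
  proof -
    have "\<beta> x = 0" "\<beta> y = 0" using x y b unfolding ZK_def by blast+
    then show ?thesis using lf_add[OF R'_lf[OF b] xH yH] by simp
  qed
  then show "x + y \<in> ZK K" unfolding ZK_def using x y V.subspace_add[OF K] unfolding ZK_def by blast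
next
  have K: "V.subspace K" using cov_sub[OF c] .
  fix a x assume x: "x \<in> ZK K"
  have xH: "x \<in> H" using x ZK_H[OF c] by blast
  have "\<beta> (smul a x) = 0" if b: "\<beta> \<in> R'" for \<beta>
  proof -
    have "\<beta> x = 0" using x b unfolding ZK_def by blast
    then show ?thesis using lf_smul[OF R'_lf[OF b] xH] by simp
  qed
  then show "smul a x \<in> ZK K" unfolding ZK_def using x V.subspace_scale[OF K] unfolding ZK_def by blast
qed

lemma caseB: assumes c: "is_cover smul B H R' K" and I: "lie_ideal smul br (Lc K) I"
  and nex: "\<not> (\<exists>\<alpha>\<in>R' - {z0}. \<exists>y\<in>I. y \<in> E \<alpha> \<and> y \<noteq> 0)"
  shows "I \<subseteq> ZK K"
proof
  fix x assume x: "x \<in> I"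
  have KH: "K \<subseteq> H" using cov_H[OF c] .
  have xL: "x \<in> Lc K" using x idl(2)[OF I] by blast
  obtain cc where cc: "cmpn K cc" "x = sum cc R'" using decomp_L[OF cov_sub[OF c] xL] by blast
  have ccE: "\<And>\<alpha>. \<alpha> \<in> R' \<Longrightarrow> cc \<alpha> \<in> E \<alpha>" using cmpn_E[OF KH cc(1)] .
  have ccI: "cc \<alpha> \<in> I" if "\<alpha> \<in> R'" for \<alpha>
  proof (rule proj[OF KH idl(1)[OF I] _ fin _ ccE _ that])
    fix k y assume "k \<in> K" "y \<in> I" then show "br k y \<in> I" using idl(3)[OF I] K_L by blast
  next
    fix \<alpha> \<beta> assume "\<alpha> \<in> R'" "\<beta> \<in> R'" "\<alpha> \<noteq> \<beta>" then show "\<exists>k\<in>K. \<alpha> k \<noteq> \<beta> k" using dist_K[OF c] by blast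
  next
    show "sum cc R' \<in> I" using x cc(2) by simp
  qed
  have cz: "cc \<alpha> = 0" if "\<alpha> \<in> R' - {z0}" for \<alpha>
    using nex ccI[of \<alpha>] ccE[of \<alpha>] that by blast
  have "x = cc z0 + sum cc (R' - {z0})" using cc(2) sum.remove[OF fin z0R'] by simp
  also have "sum cc (R' - {z0}) = 0" using cz by simp
  finally have xe: "x = cc z0" by simp
  then have xK: "x \<in> K" using cc(1) unfolding cmpn_def by simp
  have xH: "x \<in> H" using xK KH by blast
  have "\<beta> x = 0" if b: "\<beta> \<in> R'" for \<beta>
  proof (cases "\<beta> = z0")
    case False
    then have b': "\<beta> \<in> R' - {z0}" using b by simp
    obtain z where z: "z \<in> E \<beta>" "z \<noteq> 0" using R_nz b R'R by blast
    have zL: "z \<in> Lc K" using E_L[OF b'] z(1) by blast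
    have "br x z \<in> I" using idl_r[OF I zL x] .
    moreover have "br x z = smul (\<beta> x) z" using HE[OF xH z(1)] .
    moreover have "smul (\<beta> x) z \<in> E \<beta>" using z(1) V.subspace_scale[OF E_subspace] by blast
    ultimately have "smul (\<beta> x) z = 0" using nex b' by metis
    then show ?thesis using z(2) by simp
  qed simp
  then show "x \<in> ZK K" unfolding ZK_def using xK by blast
qed

lemma split: assumes c: "is_cover smul B H R' K" and h: "h \<in> K" shows "\<exists>t\<in>T. \<exists>z\<in>ZK K. h = t + z"
proof -
  have finX: "finite X" unfolding X_def using fin by simp
  have nd: "ndg (V.span X)" unfolding ndg_def using T_nd by blast
  obtain t where t: "t \<in> V.span X" "\<forall>y\<in>V.span X. B h y = B t y" using riesz[OF finX nd, of h] by blast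
  have tK: "t \<in> K" using t(1) T_K[OF c] unfolding T_def by blast
  have zK: "h - t \<in> K" using V.subspace_diff[OF cov_sub[OF c] h tK] .
  have zH: "h - t \<in> H" using zK cov_H[OF c] by blast
  have "\<beta> (h - t) = 0" if b: "\<beta> \<in> R'" for \<beta>
  proof -
    have tb: "tv \<beta> \<in> V.span X" unfolding X_def using b by (blast intro: V.span_base)
    have "\<beta> (h - t) = B (h - t) (tv \<beta>)" using tvec_prop[OF htR'[OF b] zH] .
    also have "\<dots> = B h (tv \<beta>) - B t (tv \<beta>)" by (simp add: B_diff1)
    also have "\<dots> = 0" using t(2) tb by simp
    finally show ?thesis .
  qed
  then have "h - t \<in> ZK K" unfolding ZK_def using zK by blast
  then show ?thesis using t(1) unfolding T_def by (intro bexI[of _ t] bexI[of _ "h - t"]) simp_all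
qed

lemma TZ0: assumes t: "t \<in> T" and z: "t \<in> ZK K" shows "t = 0"
proof -
  have tH: "t \<in> H" using t T_H by blast
  have sub: "V.subspace {y. B t y = 0}" unfolding V.subspace_def by (simp add: B_add2 B_smul2)
  have "X \<subseteq> {y. B t y = 0}"
  proof
    fix y assume "y \<in> X"
    then obtain \<beta> where b: "\<beta> \<in> R'" "y = tv \<beta>" unfolding X_def by blast
    have "\<beta> t = B t (tv \<beta>)" using tvec_prop[OF htR'[OF b(1)] tH] .
    moreover have "\<beta> t = 0" using z b(1) unfolding ZK_def by blast
    ultimately show "y \<in> {y. B t y = 0}" using b(2) by simp
  qed
  then have "V.span X \<subseteq> {y. B t y = 0}" using sub by (rule V.span_minimal)
  then show ?thesis using T_nd t unfolding T_def by blast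
qed

lemma ZK_central: assumes c: "is_cover smul B H R' K" and j: "j \<in> ZK K" and x: "x \<in> Lc K"
  shows "br x j = 0"
proof -
  have jH: "j \<in> H" using j ZK_H[OF c] by blast
  have "br x j \<in> {0}"
  proof (rule br_span[OF V.subspace_single_0 _ x[unfolded Lc_def], of "{j}"])
    fix a b assume a: "a \<in> K \<union> U" and b: "b \<in> {j}"
    show "br a b \<in> {0}"
    proof (cases "a \<in> K")
      case True then show ?thesis using b jH H_ab cov_H[OF c] by blast
    next
      case False
      then obtain \<alpha> where aa: "\<alpha> \<in> R' - {z0}" "a \<in> E \<alpha>" using a unfolding U_def by blast
      have "\<alpha> j = 0" using j aa unfolding ZK_def by blast
      then have "br j a = 0" using HE[OF jH aa(2)] by simp
      then show ?thesis using b br_anti[of a j] by simp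
    qed
  qed (simp add: V.span_base)
  then show ?thesis by simp
qed

end


context EAR begin

lemma fin_ZK: assumes c: "is_cover smul B H R' K" obtains F0 where "finite F0" "ZK K \<subseteq> V.span F0"
proof -
  obtain F0 where F0: "finite F0" "H \<subseteq> V.span F0" using H_fin unfolding fin_dim_def by blast
  then show ?thesis using that ZK_H[OF c] by blast
qed

lemma Lc_subspace: "V.subspace (Lc K)" unfolding Lc_def by simp

lemma ssum_L: assumes "I \<subseteq> Lc K" "J \<subseteq> Lc K" shows "ssum I J \<subseteq> Lc K"
proof
  fix x assume "x \<in> ssum I J"
  then show "x \<in> Lc K" by (rule ssumE) (use assms V.subspace_add[OF Lc_subspace] in blast)
qed

lemma sumU: assumes "\<And>\<alpha>. \<alpha> \<in> R' - {z0} \<Longrightarrow> cc \<alpha> \<in> E \<alpha>" "U \<subseteq> M" "V.subspace M"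
  shows "sum cc (R' - {z0}) \<in> M"
  by (rule V.subspace_sum[OF assms(3)]) (use assms(1,2) in \<open>auto simp: U_def\<close>)

lemma reductive: assumes c: "is_cover smul B H R' K" shows "reductive_lie smul br (Lc K)"
  unfolding reductive_lie_def
proof (intro conjI allI impI)
  show "lie_subalgebra smul br (Lc K)" by (rule Lc_sub[OF c])
  fix I assume I: "lie_ideal smul br (Lc K) I"
  have sI: "V.subspace I" using idl(1)[OF I] .
  have IL: "I \<subseteq> Lc K" using idl(2)[OF I] .
  have KH: "K \<subseteq> H" using cov_H[OF c] .
  have sZ: "V.subspace (ZK K)" using ZK_sub[OF c] .
  have ZKK: "ZK K \<subseteq> K" unfolding ZK_def by blast
  obtain F0 where F0: "finite F0" "ZK K \<subseteq> V.span F0" using fin_ZK[OF c] by blast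
  have goal: "\<exists>J. lie_ideal smul br (Lc K) J \<and> I \<inter> J = {0} \<and> Lc K = ssum I J"
  proof (cases "\<exists>\<alpha>\<in>R' - {z0}. \<exists>y\<in>I. y \<in> E \<alpha> \<and> y \<noteq> 0")
    case True
    have XI: "X \<subseteq> I" and UI: "U \<subseteq> I" using caseA[OF c I True] by blast+
    have TI: "T \<subseteq> I" unfolding T_def using XI sI by (rule V.span_minimal)
    obtain C where C: "V.subspace C" "C \<subseteq> ZK K" "\<forall>x. x \<in> I \<inter> ZK K \<and> x \<in> C \<longrightarrow> x = 0"
      "\<forall>w\<in>ZK K. \<exists>u\<in>I \<inter> ZK K. \<exists>c\<in>C. w = u + c"
      using complement[OF V.subspace_inter[OF sI sZ] sZ _ F0] by blast
    have CL: "C \<subseteq> Lc K" using C(2) ZKK K_L by blast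
    have idC: "lie_ideal smul br (Lc K) C" unfolding lie_ideal_def
    proof (intro conjI ballI)
      show "V.subspace C" by (rule C(1))
      show "C \<subseteq> Lc K" by (rule CL)
      fix x y assume "x \<in> Lc K" "y \<in> C"
      then have "br x y = 0" using ZK_central[OF c] C(2) by blast
      then show "br x y \<in> C" using V.subspace_0[OF C(1)] by simp
    qed
    have int: "I \<inter> C = {0}"
    proof
      show "I \<inter> C \<subseteq> {0}" using C(2,3) by blast
      show "{0} \<subseteq> I \<inter> C" using V.subspace_0[OF sI] V.subspace_0[OF C(1)] by blast
    qed
    have "Lc K \<subseteq> ssum I C"
    proof
      fix x assume x: "x \<in> Lc K"
      obtain cc where cc: "cmpn K cc" "x = sum cc R'" using decomp_L[OF cov_sub[OF c] x] by blast
      have c0: "cc z0 \<in> K" using cc(1) unfolding cmpn_def by blast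
      have cE: "\<And>\<alpha>. \<alpha> \<in> R' - {z0} \<Longrightarrow> cc \<alpha> \<in> E \<alpha>" using cc(1) unfolding cmpn_def by blast
      obtain t z where tz: "t \<in> T" "z \<in> ZK K" "cc z0 = t + z" using split[OF c c0] by blast
      obtain i j where ij: "i \<in> I \<inter> ZK K" "j \<in> C" "z = i + j" using C(4) tz(2) by blast
      have xs: "x = cc z0 + sum cc (R' - {z0})" using cc(2) sum.remove[OF fin z0R'] by simp
      have "x = (t + i + sum cc (R' - {z0})) + j" using xs tz(3) ij(3) by (simp add: algebra_simps)
      moreover have "t + i + sum cc (R' - {z0}) \<in> I"
        using TI tz(1) ij(1) sumU[OF cE UI sI] V.subspace_add[OF sI] by blast
      ultimately show "x \<in> ssum I C" using ssumI ij(2) by metis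
    qed
    moreover have "ssum I C \<subseteq> Lc K" using ssum_L[OF IL CL] .
    ultimately show ?thesis using idC int by blast
  next
    case False
    have IZ: "I \<subseteq> ZK K" using caseB[OF c I False] .
    obtain C0 where C0: "V.subspace C0" "C0 \<subseteq> ZK K" "\<forall>x. x \<in> I \<and> x \<in> C0 \<longrightarrow> x = 0"
      "\<forall>w\<in>ZK K. \<exists>u\<in>I. \<exists>c\<in>C0. w = u + c"
      using complement[OF sI sZ IZ F0] by blast
    define K0 where "K0 = ssum T C0"
    have sT: "V.subspace T" unfolding T_def by simp
    have sK0: "V.subspace K0" unfolding K0_def using ssum_sub[OF sT C0(1)] .
    have K0K: "K0 \<subseteq> K"
    proof
      fix x assume "x \<in> K0"
      then show "x \<in> K" unfolding K0_def
        by (rule ssumE) (use T_K[OF c] C0(2) ZKK V.subspace_add[OF cov_sub[OF c]] in blast)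
    qed
    have K0H: "K0 \<subseteq> H" using K0K KH by blast
    have XK0: "X \<subseteq> K0" unfolding K0_def using ssum_left[OF C0(1)] V.span_superset[of X] unfolding T_def by blast
    define J where "J = Lc K0"
    have sJ: "V.subspace J" unfolding J_def by (rule Lc_subspace)
    have JL: "J \<subseteq> Lc K" unfolding J_def Lc_def using K0K by (intro V.span_mono) blast
    have idJ: "lie_ideal smul br (Lc K) J" unfolding lie_ideal_def
    proof (intro conjI ballI)
      show "V.subspace J" by (rule sJ)
      show "J \<subseteq> Lc K" by (rule JL)
      fix x y assume x: "x \<in> Lc K" and y: "y \<in> J"
      show "br x y \<in> J"
      proof (rule br_span[OF sJ _ x[unfolded Lc_def] y[unfolded J_def Lc_def]])
        fix a b assume a: "a \<in> K \<union> U" and b: "b \<in> K0 \<union> U"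
        show "br a b \<in> J"
        proof (cases "a \<in> K")
          case aK: True
          show ?thesis
          proof (cases "b \<in> K0")
            case True
            then have "br a b = 0" using aK KH K0H H_ab by blast
            then show ?thesis using V.subspace_0[OF sJ] by simp
          next
            case False
            then obtain \<beta> where bb: "\<beta> \<in> R' - {z0}" "b \<in> E \<beta>" using b unfolding U_def by blast
            have "br a b = smul (\<beta> a) b" using HE aK KH bb by blast
            moreover have "b \<in> J" unfolding J_def using E_L[OF bb(1)] bb(2) by blast
            ultimately show ?thesis using V.subspace_scale[OF sJ] by simp
          qed
        next
          case aU: False
          then obtain \<alpha> where aa: "\<alpha> \<in> R' - {z0}" "a \<in> E \<alpha>" using a unfolding U_def by blast
          have aJ: "a \<in> J" unfolding J_def using E_L[OF aa(1)] aa(2) by blast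
          show ?thesis
          proof (cases "b \<in> K0")
            case True
            have "br a b = - smul (\<alpha> b) a" using br_anti[of a b] HE[of b a \<alpha>] True K0H aa by auto
            moreover have "- smul (\<alpha> b) a \<in> J" using aJ V.subspace_scale[OF sJ] V.subspace_neg[OF sJ] by blast
            ultimately show ?thesis by simp
          next
            case False
            then obtain \<beta> where bb: "\<beta> \<in> R' - {z0}" "b \<in> E \<beta>" using b unfolding U_def by blast
            have "V.span (X \<union> U) \<subseteq> J" unfolding J_def Lc_def using XK0 by (intro V.span_mono) blast
            then show ?thesis using EE[OF aa(1) bb(1) aa(2) bb(2)] by blast
          qed
        qed
      qed
    qed
    have int: "I \<inter> J = {0}"
    proof
      show "{0} \<subseteq> I \<inter> J" using V.subspace_0[OF sI] V.subspace_0[OF sJ] by blast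
      show "I \<inter> J \<subseteq> {0}"
      proof
        fix x assume x: "x \<in> I \<inter> J"
        obtain cc where cc: "cmpn K0 cc" "x = sum cc R'" using decomp_L[OF sK0, of x] x unfolding J_def by blast
        have xZ: "x \<in> ZK K" using x IZ by blast
        have xH: "x \<in> H" using xZ ZK_H[OF c] by blast
        have c0: "cc z0 \<in> K0" using cc(1) unfolding cmpn_def by blast
        define d where "d \<alpha> = (if \<alpha> = z0 then cc z0 - x else cc \<alpha>)" for \<alpha>
        have dE: "d \<alpha> \<in> E \<alpha>" if "\<alpha> \<in> R'" for \<alpha>
        proof (cases "\<alpha> = z0")
          case True
          have "cc z0 - x \<in> H" using c0 K0H xH V.subspace_diff[OF H_subspace] by blast
          then show ?thesis unfolding d_def using True H0 by simp
        next
          case False then show ?thesis unfolding d_def using cc(1) that unfolding cmpn_def by simp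
        qed
        have "sum d R' = d z0 + sum d (R' - {z0})" using sum.remove[OF fin z0R'] by simp
        also have "sum d (R' - {z0}) = sum cc (R' - {z0})" unfolding d_def by (rule sum.cong) auto
        also have "d z0 + sum cc (R' - {z0}) = (cc z0 + sum cc (R' - {z0})) - x" unfolding d_def by simp
        also have "cc z0 + sum cc (R' - {z0}) = x"
        proof -
          have "sum cc R' = cc z0 + sum cc (R' - {z0})" by (rule sum.remove[OF fin z0R'])
          then show ?thesis using cc(2) by simp
        qed
        finally have "sum d R' = 0" by simp
        then have "d z0 = 0" using indep_R'[OF dE _ z0R'] by blast
        then have xe: "x = cc z0" unfolding d_def by simp
        then have "x \<in> K0" using c0 by simp
        then obtain t c' where tc: "t \<in> T" "c' \<in> C0" "x = t + c'" unfolding K0_def by (rule ssumE) blast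
        have "t = x - c'" using tc(3) by simp
        then have "t \<in> ZK K" using V.subspace_diff[OF sZ xZ] tc(2) C0(2) by blast
        then have "t = 0" using TZ0 tc(1) by blast
        then have "x = c'" using tc(3) by simp
        then have "x = 0" using C0(3) x tc(2) by blast
        then show "x \<in> {0}" by simp
      qed
    qed
    have "Lc K \<subseteq> ssum I J"
    proof
      fix x assume x: "x \<in> Lc K"
      obtain cc where cc: "cmpn K cc" "x = sum cc R'" using decomp_L[OF cov_sub[OF c] x] by blast
      have c0: "cc z0 \<in> K" using cc(1) unfolding cmpn_def by blast
      have cE: "\<And>\<alpha>. \<alpha> \<in> R' - {z0} \<Longrightarrow> cc \<alpha> \<in> E \<alpha>" using cc(1) unfolding cmpn_def by blast
      obtain t z where tz: "t \<in> T" "z \<in> ZK K" "cc z0 = t + z" using split[OF c c0] by blast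
      obtain i j where ij: "i \<in> I" "j \<in> C0" "z = i + j" using C0(4) tz(2) by blast
      have xs: "x = cc z0 + sum cc (R' - {z0})" using cc(2) sum.remove[OF fin z0R'] by simp
      have "x = i + ((t + j) + sum cc (R' - {z0}))" using xs tz(3) ij(3) by (simp add: algebra_simps)
      moreover have "t + j \<in> J" unfolding J_def using ssumI[OF tz(1) ij(2)] K_L[of K0] unfolding K0_def by blast
      moreover have "sum cc (R' - {z0}) \<in> J" using sumU[OF cE _ sJ] U_L[of K0] unfolding J_def by blast
      ultimately show "x \<in> ssum I J" using ssumI[OF ij(1)] V.subspace_add[OF sJ] by metis
    qed
    moreover have "ssum I J \<subseteq> Lc K" using ssum_L[OF IL JL] .
    ultimately show ?thesis using idJ int by blast
  qed
  then show "\<exists>J. lie_ideal smul br (Lc K) J \<and> I \<inter> J = {0} \<and> Lc K = {x + y |x y. x \<in> I \<and> y \<in> J}"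
    unfolding ssum_def .
qed

end


context EAR begin

lemma exists_aniso: obtains \<alpha> where "\<alpha> \<in> R' - {z0}"
proof -
  have "rform B H z0 z0 = 0" unfolding rform_def tvec_z0 by simp
  then have "z0 \<in> R' - aniso B H R'" using z0R' unfolding aniso_def by simp
  then obtain \<alpha> where "\<alpha> \<in> aniso B H R'" using noniso unfolding nonisolated_def by blast
  then show ?thesis using that aniso_R' by blast
qed

lemma simple_T: "simple_lie smul br (Lc T)"
  unfolding simple_lie_def
proof (intro conjI allI impI)
  show "lie_subalgebra smul br (Lc T)" by (rule Lc_sub[OF T_cov])
  obtain \<alpha> where a: "\<alpha> \<in> R' - {z0}" by (rule exists_aniso)
  obtain x where x: "x \<in> E \<alpha>" "x \<noteq> 0" using R_nz a R'R by blast
  have tT: "tv \<alpha> \<in> T" using tvK[OF T_cov] a by blast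
  have tH: "tv \<alpha> \<in> H" using tT T_H by blast
  have "br (tv \<alpha>) x = smul (\<alpha> (tv \<alpha>)) x" by (rule HE[OF tH x(1)])
  moreover have "\<alpha> (tv \<alpha>) \<noteq> 0" using A_facts(4,7)[OF Rm_facts(1)[OF a]] by simp
  ultimately have "br (tv \<alpha>) x \<noteq> 0" using x(2) by simp
  moreover have "tv \<alpha> \<in> Lc T" using tT K_L by blast
  moreover have "x \<in> Lc T" using E_L[OF a] x(1) by blast
  ultimately show "\<exists>x\<in>Lc T. \<exists>y\<in>Lc T. br x y \<noteq> 0" by blast
next
  fix I assume I: "lie_ideal smul br (Lc T) I"
  have sI: "V.subspace I" using idl(1)[OF I] .
  show "I = {0} \<or> I = Lc T"
  proof (cases "\<exists>\<alpha>\<in>R' - {z0}. \<exists>y\<in>I. y \<in> E \<alpha> \<and> y \<noteq> 0")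
    case True
    have XI: "X \<subseteq> I" and UI: "U \<subseteq> I" using caseA[OF T_cov I True] by blast+
    have TI: "T \<subseteq> I" unfolding T_def using XI sI by (rule V.span_minimal)
    have "Lc T \<subseteq> I" unfolding Lc_def using TI UI sI by (intro V.span_minimal) auto
    then show ?thesis using idl(2)[OF I] by blast
  next
    case False
    have IZ: "I \<subseteq> ZK T" using caseB[OF T_cov I False] .
    have "I \<subseteq> {0}"
    proof
      fix x assume "x \<in> I"
      then have "x \<in> ZK T" using IZ by blast
      then have "x = 0" using TZ0 unfolding ZK_def by blast
      then show "x \<in> {0}" by simp
    qed
    then show ?thesis using V.subspace_0[OF sI] by blast
  qed
qed

lemma T_sub: "V.subspace T" unfolding T_def by simp

lemma roots_T: "roots_in smul br (Lc T) T = (\<lambda>\<alpha>. restrict_fun \<alpha> T) ` R'"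
proof
  show "(\<lambda>\<alpha>. restrict_fun \<alpha> T) ` R' \<subseteq> roots_in smul br (Lc T) T"
  proof
    fix \<beta> assume "\<beta> \<in> (\<lambda>\<alpha>. restrict_fun \<alpha> T) ` R'"
    then obtain \<alpha> where a: "\<alpha> \<in> R'" "\<beta> = restrict_fun \<alpha> T" by blast
    have lfa: "lin_functional smul H \<alpha>" using R'_lf[OF a(1)] .
    have bT: "\<beta> h = \<alpha> h" if "h \<in> T" for h using that a(2) unfolding restrict_fun_def by simp
    have lf: "lin_functional smul T \<beta>" unfolding lin_functional_def
    proof (intro conjI ballI allI impI)
      fix x y a b assume x: "x \<in> T" and y: "y \<in> T"
      have "smul a x + smul b y \<in> T"
        using V.subspace_add[OF T_sub V.subspace_scale[OF T_sub x] V.subspace_scale[OF T_sub y]] .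
      then have "\<beta> (smul a x + smul b y) = \<alpha> (smul a x + smul b y)" by (rule bT)
      also have "\<dots> = a * \<alpha> x + b * \<alpha> y" using lf_lin[OF lfa] x y T_H by blast
      finally show "\<beta> (smul a x + smul b y) = a * \<beta> x + b * \<beta> y" using bT x y by simp
    next
      fix x assume "x \<notin> T" then show "\<beta> x = 0" using a(2) unfolding restrict_fun_def by simp
    qed
    obtain x where x: "x \<in> root_space smul br T \<beta>" "x \<in> Lc T" "x \<noteq> 0"
    proof (cases "\<alpha> = z0")
      case True
      obtain \<gamma> where g: "\<gamma> \<in> R' - {z0}" by (rule exists_aniso)
      have tT: "tv \<gamma> \<in> T" using tvK[OF T_cov] g by blast
      have "\<gamma> (tv \<gamma>) \<noteq> 0" using A_facts(4,7)[OF Rm_facts(1)[OF g]] by simp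
      then have t0: "tv \<gamma> \<noteq> 0" using lf_0[OF R'_lf] g by auto
      have "tv \<gamma> \<in> root_space smul br T \<beta>" unfolding root_space_def
      proof (intro CollectI ballI)
        fix h assume h: "h \<in> T"
        have "br h (tv \<gamma>) = 0" using H_ab h tT T_H by blast
        moreover have "\<beta> h = 0" using bT[OF h] True by simp
        ultimately show "br h (tv \<gamma>) = smul (\<beta> h) (tv \<gamma>)" by simp
      qed
      then show ?thesis using that tT K_L t0 by blast
    next
      case False
      obtain y where y: "y \<in> E \<alpha>" "y \<noteq> 0" using R_nz a(1) R'R by blast
      have "y \<in> root_space smul br T \<beta>" unfolding root_space_def
      proof (intro CollectI ballI)
        fix h assume h: "h \<in> T"
        then have "h \<in> H" using T_H by blast
        then show "br h y = smul (\<beta> h) y" using HE y(1) bT[OF h] by simp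
      qed
      moreover have "y \<in> Lc T" using E_L[of \<alpha> T] False a(1) y(1) by blast
      ultimately show ?thesis using that y(2) by blast
    qed
    have "root_space smul br T \<beta> \<inter> Lc T \<noteq> {0}" using x by blast
    then show "\<beta> \<in> roots_in smul br (Lc T) T" unfolding roots_in_def using lf by blast
  qed
next
  show "roots_in smul br (Lc T) T \<subseteq> (\<lambda>\<alpha>. restrict_fun \<alpha> T) ` R'"
  proof
    fix \<beta> assume "\<beta> \<in> roots_in smul br (Lc T) T"
    then have lf: "lin_functional smul T \<beta>" and ne: "root_space smul br T \<beta> \<inter> Lc T \<noteq> {0}"
      unfolding roots_in_def by simp_all
    have "0 \<in> root_space smul br T \<beta>" unfolding root_space_def by simp
    moreover have "0 \<in> Lc T" using V.subspace_0[OF Lc_subspace] .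
    ultimately obtain x where x: "x \<in> root_space smul br T \<beta>" "x \<in> Lc T" "x \<noteq> 0" using ne by blast
    obtain cc where cc: "cmpn T cc" "x = sum cc R'" using decomp_L[OF T_sub x(2)] by blast
    have cE: "\<And>\<alpha>. \<alpha> \<in> R' \<Longrightarrow> cc \<alpha> \<in> E \<alpha>" using cmpn_E[OF T_H cc(1)] .
    have comp0: "smul (\<alpha> h - \<beta> h) (cc \<alpha>) = 0" if h: "h \<in> T" and a: "\<alpha> \<in> R'" for h \<alpha>
    proof (rule indep_R'[OF _ _ a])
      have hH: "h \<in> H" using h T_H by blast
      show "smul (\<gamma> h - \<beta> h) (cc \<gamma>) \<in> E \<gamma>" if "\<gamma> \<in> R'" for \<gamma>
        using V.subspace_scale[OF E_subspace] cE[OF that] by blast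
      have "br h x = smul (\<beta> h) x" using x(1) h unfolding root_space_def by blast
      moreover have "br h x = (\<Sum>\<gamma>\<in>R'. smul (\<gamma> h) (cc \<gamma>))" unfolding cc(2) br_sum2
        by (rule sum.cong) (simp_all add: HE[OF hH cE])
      moreover have "smul (\<beta> h) x = (\<Sum>\<gamma>\<in>R'. smul (\<beta> h) (cc \<gamma>))" unfolding cc(2) by (simp add: V.scale_sum_right)
      ultimately have "(\<Sum>\<gamma>\<in>R'. smul (\<gamma> h) (cc \<gamma>)) - (\<Sum>\<gamma>\<in>R'. smul (\<beta> h) (cc \<gamma>)) = 0" by simp
      then show "(\<Sum>\<gamma>\<in>R'. smul (\<gamma> h - \<beta> h) (cc \<gamma>)) = 0"
        by (simp add: V.scale_left_diff_distrib sum_subtractf)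
    qed
    have "sum cc R' \<noteq> 0" using x(3) cc(2) by simp
    then obtain \<alpha> where a: "\<alpha> \<in> R'" "cc \<alpha> \<noteq> 0" using sum_nz by blast
    have "\<beta> = restrict_fun \<alpha> T"
    proof (rule ext)
      fix h show "\<beta> h = restrict_fun \<alpha> T h"
      proof (cases "h \<in> T")
        case True
        have "smul (\<alpha> h - \<beta> h) (cc \<alpha>) = 0" using comp0[OF True a(1)] .
        then have "\<alpha> h = \<beta> h" using a(2) by simp
        then show ?thesis using True unfolding restrict_fun_def by simp
      next
        case False
        then show ?thesis using lf unfolding lin_functional_def restrict_fun_def by simp
      qed
    qed
    then show "\<beta> \<in> (\<lambda>\<alpha>. restrict_fun \<alpha> T) ` R'" using a(1) by blast
  qed
qed

end

theorem proposition5p13: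
  fixes smul :: "complex \<Rightarrow> 'a::ab_group_add \<Rightarrow> 'a"
    and br :: "'a \<Rightarrow> 'a \<Rightarrow> 'a"
    and B :: "'a \<Rightarrow> 'a \<Rightarrow> complex"
    and H H' :: "'a set"
    and R' :: "('a \<Rightarrow> complex) set"
  assumes "eala smul br B H"
    and "subsystem smul B H (roots smul br H) R'"
    and "closed_sub (roots smul br H) R'"
    and "finite R'"
    and "is_cover smul B H R' H'"
  shows "lie_subalgebra smul br (lie_cover smul br H R' H') \<and>
         fin_dim smul (lie_cover smul br H R' H') \<and>
         reductive_lie smul br (lie_cover smul br H R' H') \<and>
         is_cover smul B H R' (hsub smul B H R') \<and>
         fin_dim smul (lie_cover smul br H R' (hsub smul B H R')) \<and>
         simple_lie smul br (lie_cover smul br H R' (hsub smul B H R')) \<and>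
         roots_in smul br (lie_cover smul br H R' (hsub smul B H R')) (hsub smul B H R')
           = (\<lambda>\<alpha>. restrict_fun \<alpha> (hsub smul B H R')) ` R'"
proof -
  interpret Q: EAR smul br B H R'
    by (intro EAR.intro EA.intro EAR_axioms.intro) (fact assms)+
  show ?thesis
    unfolding Q.Lc_eq Q.T_eq
    using Q.Lc_sub[OF assms(5)] Q.fin_Lc[OF assms(5)] Q.reductive[OF assms(5)] Q.T_cov
      Q.fin_Lc[OF Q.T_cov] Q.simple_T Q.roots_T by blast
qed


end
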